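(* Let $X$ be a Tychonoff space. (a) If $X$ has a $\sigma$-disjoint base consisting of cozero-sets, then $X$ can be embedded in a uniform Eberlein compact. (b) If $X$ has a $\sigma$-strongly point-finite base consisting of cozero-sets, then $X$ can be embedded in an Eberlein compact.
   Context: A cozero-set of $X$ is a set $X\setminus f^{-1}(0)$ for a continuous $f:X\to[0,1]$. A family of subsets of a set is strongly point-finite if every countably infinite subfamily contains a finite subfamily with empty intersection; $\sigma$-strongly point-finite means a countable union of such families. An Eberlein compact is a compact Hausdorff space homeomorphic to a weakly compact subset of a Banach space; a uniform Eberlein compact is one homeomorphic to a weakly compact subset of a Hilbert space. *)

theory Defs
  imports "HOL-Analysis.Analysis"
begin

definition tychonoff_space :: "'a topology \<Rightarrow> bool" where
  "tychonoff_space X \<longleftrightarrow> completely_regular_space X \<and> Hausdorff_space X"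

definition cozero_set :: "'a topology \<Rightarrow> 'a set \<Rightarrow> bool" where
  "cozero_set X U \<longleftrightarrow>
     (\<exists>f::'a \<Rightarrow> real. continuous_map X (top_of_set {0..1}) f \<and>
        U = topspace X - {x \<in> topspace X. f x = 0})"

definition is_base :: "'a topology \<Rightarrow> 'a set set \<Rightarrow> bool" where
  "is_base X B \<longleftrightarrow> (\<forall>V\<in>B. openin X V) \<and>
     (\<forall>U. openin X U \<longrightarrow> (\<exists>B'. B' \<subseteq> B \<and> \<Union>B' = U))"

definition strongly_point_finite :: "'a set set \<Rightarrow> bool" where
  "strongly_point_finite F \<longleftrightarrow>
     (\<forall>C. C \<subseteq> F \<and> countable C \<and> infinite C \<longrightarrow>
        (\<exists>D. D \<subseteq> C \<and> finite D \<and> \<Inter>D = {}))"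

definition sigma_disjoint :: "'a set set \<Rightarrow> bool" where
  "sigma_disjoint B \<longleftrightarrow>
     (\<exists>F :: nat \<Rightarrow> 'a set set. B = (\<Union>n. F n) \<and> (\<forall>n. disjoint (F n)))"

definition sigma_strongly_point_finite :: "'a set set \<Rightarrow> bool" where
  "sigma_strongly_point_finite B \<longleftrightarrow>
     (\<exists>F :: nat \<Rightarrow> 'a set set. B = (\<Union>n. F n) \<and> (\<forall>n. strongly_point_finite (F n)))"

text \<open>A (real) Banach space is represented by a linear subspace V of the real vector
  space of all functions 'i => real (pointwise operations) together with a complete
  norm on V. Every Banach space whose Hamel dimension is at most that of
  'i => real is linearly isometric to such a representation.\<close>

definition vadd :: "('i \<Rightarrow> real) \<Rightarrow> ('i \<Rightarrow> real) \<Rightarrow> ('i \<Rightarrow> real)" where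
  "vadd x y = (\<lambda>t. x t + y t)"

definition vscale :: "real \<Rightarrow> ('i \<Rightarrow> real) \<Rightarrow> ('i \<Rightarrow> real)" where
  "vscale c x = (\<lambda>t. c * x t)"

definition vdiff :: "('i \<Rightarrow> real) \<Rightarrow> ('i \<Rightarrow> real) \<Rightarrow> ('i \<Rightarrow> real)" where
  "vdiff x y = (\<lambda>t. x t - y t)"

definition linear_subspace :: "('i \<Rightarrow> real) set \<Rightarrow> bool" where
  "linear_subspace V \<longleftrightarrow> (\<lambda>t. 0) \<in> V \<and>
     (\<forall>x\<in>V. \<forall>y\<in>V. vadd x y \<in> V) \<and> (\<forall>c. \<forall>x\<in>V. vscale c x \<in> V)"

definition normed_space_on :: "('i \<Rightarrow> real) set \<Rightarrow> (('i \<Rightarrow> real) \<Rightarrow> real) \<Rightarrow> bool" where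
  "normed_space_on V N \<longleftrightarrow> linear_subspace V \<and>
     (\<forall>x\<in>V. N x \<ge> 0) \<and> (\<forall>x\<in>V. N x = 0 \<longrightarrow> x = (\<lambda>t. 0)) \<and>
     (\<forall>c. \<forall>x\<in>V. N (vscale c x) = \<bar>c\<bar> * N x) \<and>
     (\<forall>x\<in>V. \<forall>y\<in>V. N (vadd x y) \<le> N x + N y)"

definition banach_space_on :: "('i \<Rightarrow> real) set \<Rightarrow> (('i \<Rightarrow> real) \<Rightarrow> real) \<Rightarrow> bool" where
  "banach_space_on V N \<longleftrightarrow> normed_space_on V N \<and>
     (\<forall>s::nat \<Rightarrow> ('i \<Rightarrow> real). (\<forall>n. s n \<in> V) \<and>
        (\<forall>e>0. \<exists>M. \<forall>m\<ge>M. \<forall>n\<ge>M. N (vdiff (s m) (s n)) < e) \<longrightarrow>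
        (\<exists>x\<in>V. (\<lambda>n. N (vdiff (s n) x)) \<longlonglongrightarrow> 0))"

definition hilbert_space_on :: "('i \<Rightarrow> real) set \<Rightarrow> (('i \<Rightarrow> real) \<Rightarrow> ('i \<Rightarrow> real) \<Rightarrow> real) \<Rightarrow> bool" where
  "hilbert_space_on V ip \<longleftrightarrow> linear_subspace V \<and>
     (\<forall>x\<in>V. \<forall>y\<in>V. ip x y = ip y x) \<and>
     (\<forall>x\<in>V. \<forall>y\<in>V. \<forall>z\<in>V. ip (vadd x y) z = ip x z + ip y z) \<and>
     (\<forall>c. \<forall>x\<in>V. \<forall>y\<in>V. ip (vscale c x) y = c * ip x y) \<and>
     (\<forall>x\<in>V. ip x x \<ge> 0) \<and> (\<forall>x\<in>V. ip x x = 0 \<longrightarrow> x = (\<lambda>t. 0)) \<and>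
     banach_space_on V (\<lambda>x. sqrt (ip x x))"

definition bounded_linear_functional_on ::
    "('i \<Rightarrow> real) set \<Rightarrow> (('i \<Rightarrow> real) \<Rightarrow> real) \<Rightarrow> (('i \<Rightarrow> real) \<Rightarrow> real) \<Rightarrow> bool" where
  "bounded_linear_functional_on V N f \<longleftrightarrow>
     (\<forall>x\<in>V. \<forall>y\<in>V. f (vadd x y) = f x + f y) \<and>
     (\<forall>c. \<forall>x\<in>V. f (vscale c x) = c * f x) \<and>
     (\<exists>C. \<forall>x\<in>V. \<bar>f x\<bar> \<le> C * N x)"

definition weak_topology ::
    "('i \<Rightarrow> real) set \<Rightarrow> (('i \<Rightarrow> real) \<Rightarrow> real) \<Rightarrow> ('i \<Rightarrow> real) topology" where
  "weak_topology V N = topology_generated_by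
     {{x \<in> V. f x \<in> U} | f U. bounded_linear_functional_on V N f \<and> open U}"

definition embeds_in_eberlein_compact :: "'a topology \<Rightarrow> bool" where
  "embeds_in_eberlein_compact X \<longleftrightarrow>
     (\<exists>(V :: ('a set \<Rightarrow> real) set) N K f.
        banach_space_on V N \<and> K \<subseteq> V \<and> compactin (weak_topology V N) K \<and>
        embedding_map X (subtopology (weak_topology V N) K) f)"

definition embeds_in_uniform_eberlein_compact :: "'a topology \<Rightarrow> bool" where
  "embeds_in_uniform_eberlein_compact X \<longleftrightarrow>
     (\<exists>(V :: ('a set \<Rightarrow> real) set) ip K f.
        hilbert_space_on V ip \<and> K \<subseteq> V \<and>
        compactin (weak_topology V (\<lambda>x. sqrt (ip x x))) K \<and>
        embedding_map X (subtopology (weak_topology V (\<lambda>x. sqrt (ip x x))) K) f)"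

end

theory Submission
  imports Defs
begin



lemma cont_real_crit:
  assumes "\<And>x e. x \<in> topspace Y \<Longrightarrow> e > 0 \<Longrightarrow> \<exists>W. openin Y W \<and> x \<in> W \<and> (\<forall>y\<in>W. \<bar>g y - g x\<bar> < e)"
  shows "continuous_map Y euclideanreal g"
  unfolding continuous_map_def
proof (intro conjI allI impI)
  show "g \<in> topspace Y \<rightarrow> topspace euclideanreal" by simp
  fix U assume "openin euclideanreal U"
  then have oU: "open U" by simp
  show "openin Y {x \<in> topspace Y. g x \<in> U}"
  proof (subst openin_subopen, intro ballI)
    fix x assume x: "x \<in> {x \<in> topspace Y. g x \<in> U}"
    then obtain e where e: "e > 0" "ball (g x) e \<subseteq> U" using oU open_contains_ball by blast
    obtain W where W: "openin Y W" "x \<in> W" "\<forall>y\<in>W. \<bar>g y - g x\<bar> < e" using assms[of x e] x e by auto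
    have "W \<subseteq> {x \<in> topspace Y. g x \<in> U}"
    proof
      fix y assume "y \<in> W"
      have "\<bar>g y - g x\<bar> < e" using W(3) \<open>y\<in>W\<close> by blast
      then have "g y \<in> ball (g x) e" by (simp add: dist_real_def abs_minus_commute)
      then show "y \<in> {x \<in> topspace Y. g x \<in> U}" using e W(1) \<open>y\<in>W\<close> openin_subset by blast
    qed
    then show "\<exists>T. openin Y T \<and> x \<in> T \<and> T \<subseteq> {x \<in> topspace Y. g x \<in> U}" using W by blast
  qed
qed

lemma ls_zero: "linear_subspace V \<Longrightarrow> (\<lambda>t. 0) \<in> V" unfolding linear_subspace_def by blast
lemma ls_add: "linear_subspace V \<Longrightarrow> x \<in> V \<Longrightarrow> y \<in> V \<Longrightarrow> vadd x y \<in> V" unfolding linear_subspace_def by blast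
lemma ls_scale: "linear_subspace V \<Longrightarrow> x \<in> V \<Longrightarrow> vscale c x \<in> V" unfolding linear_subspace_def by blast
lemma blf_add: "bounded_linear_functional_on V N g \<Longrightarrow> x \<in> V \<Longrightarrow> y \<in> V \<Longrightarrow> g (vadd x y) = g x + g y"
  unfolding bounded_linear_functional_on_def by blast
lemma blf_scale: "bounded_linear_functional_on V N g \<Longrightarrow> x \<in> V \<Longrightarrow> g (vscale c x) = c * g x"
  unfolding bounded_linear_functional_on_def by blast
lemma ns_ls: "normed_space_on V N \<Longrightarrow> linear_subspace V" unfolding normed_space_on_def by blast
lemma ns_nonneg: "normed_space_on V N \<Longrightarrow> x \<in> V \<Longrightarrow> N x \<ge> 0" unfolding normed_space_on_def by blast
lemma ns_scale: "normed_space_on V N \<Longrightarrow> x \<in> V \<Longrightarrow> N (vscale c x) = \<bar>c\<bar> * N x" unfolding normed_space_on_def by blast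
lemma ns_tri: "normed_space_on V N \<Longrightarrow> x \<in> V \<Longrightarrow> y \<in> V \<Longrightarrow> N (vadd x y) \<le> N x + N y" unfolding normed_space_on_def by blast

definition restr :: "'i set \<Rightarrow> ('i \<Rightarrow> real) \<Rightarrow> ('i \<Rightarrow> real)" where
  "restr S y = (\<lambda>i. if i \<in> S then y i else 0)"

definition uvec :: "'i \<Rightarrow> ('i \<Rightarrow> real)" where
  "uvec j = (\<lambda>i. if i = j then 1 else 0)"

lemma fin_comb:
  assumes V: "linear_subspace V" and u: "\<And>j. uvec j \<in> V"
    and g: "bounded_linear_functional_on V N g" and S: "finite S"
  shows "(\<lambda>i. \<Sum>j\<in>S. a j * uvec j i) \<in> V \<and> g (\<lambda>i. \<Sum>j\<in>S. a j * uvec j i) = (\<Sum>j\<in>S. a j * g (uvec j))"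
  using S
proof (induction S rule: finite_induct)
  case empty
  have z: "(\<lambda>i. \<Sum>j\<in>{}. a j * uvec j i) = (\<lambda>t. 0)" by simp
  have "(\<lambda>t::'a. 0::real) \<in> V" using V by (rule ls_zero)
  moreover have "g (\<lambda>t. 0) = 0"
  proof -
    have "g (vscale 0 (\<lambda>t. 0)) = 0 * g (\<lambda>t. 0)" using g \<open>(\<lambda>t. 0) \<in> V\<close> by (rule blf_scale)
    moreover have "vscale 0 (\<lambda>t::'a. 0::real) = (\<lambda>t. 0)" by (simp add: vscale_def)
    ultimately show ?thesis by simp
  qed
  ultimately show ?case using z by simp
next
  case (insert x F)
  let ?v = "(\<lambda>i. \<Sum>j\<in>F. a j * uvec j i)"
  have eq: "(\<lambda>i. \<Sum>j\<in>insert x F. a j * uvec j i) = vadd (vscale (a x) (uvec x)) ?v"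
    using insert by (simp add: vadd_def vscale_def)
  have sv: "vscale (a x) (uvec x) \<in> V" using V u by (rule ls_scale)
  have "vadd (vscale (a x) (uvec x)) ?v \<in> V" using V sv insert by (blast intro: ls_add)
  moreover have "g (vadd (vscale (a x) (uvec x)) ?v) = a x * g (uvec x) + g ?v"
    using blf_add[OF g sv, of ?v] blf_scale[OF g u] insert by simp
  ultimately show ?case using eq insert by simp
qed

lemma restr_fin: "finite S \<Longrightarrow> restr S y = (\<lambda>i. \<Sum>j\<in>S. y j * uvec j i)"
  by (auto simp: restr_def uvec_def fun_eq_iff if_distrib cong: if_cong)

lemma vdiff_eq: "vdiff x y = vadd x (vscale (-1) y)"
  by (simp add: vdiff_def vadd_def vscale_def)

lemma vdiff_props:
  assumes V: "normed_space_on V N" and x: "x \<in> V" and y: "y \<in> V"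
  shows "vdiff x y \<in> V" "N (vdiff x y) \<le> N x + N y"
proof -
  have L: "linear_subspace V" using V by (rule ns_ls)
  have sy: "vscale (-1) y \<in> V" using L y by (rule ls_scale)
  then show "vdiff x y \<in> V" unfolding vdiff_eq using L x ls_add by blast
  have "N (vdiff x y) \<le> N x + N (vscale (-1) y)" unfolding vdiff_eq using V x sy by (rule ns_tri)
  also have "N (vscale (-1) y) = N y" using ns_scale[OF V y, of "-1"] by simp
  finally show "N (vdiff x y) \<le> N x + N y" .
qed

lemma vdiff_g:
  assumes V: "linear_subspace V" and g: "bounded_linear_functional_on V N g" and x: "x \<in> V" and y: "y \<in> V"
  shows "g (vdiff x y) = g x - g y"
proof -
  have sy: "vscale (-1) y \<in> V" using V y by (rule ls_scale)
  have "g (vdiff x y) = g x + g (vscale (-1) y)" unfolding vdiff_eq using g x sy by (rule blf_add)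
  also have "g (vscale (-1) y) = - g y" using blf_scale[OF g y, of "-1"] by simp
  finally show ?thesis by simp
qed

lemma weak_cont_prod:
  assumes nsp: "normed_space_on V N" and u: "\<And>j. uvec j \<in> V"
    and g: "bounded_linear_functional_on V N g"
    and P: "\<And>d. d > 0 \<Longrightarrow> \<exists>E. finite E \<and> (\<forall>z\<in>V. (\<forall>i\<in>E. z i = 0) \<longrightarrow> \<bar>g z\<bar> \<le> d * N z)"
    and rn: "\<And>y E. y \<in> V \<Longrightarrow> finite E \<Longrightarrow> N (vdiff y (restr E y)) \<le> N y"
    and KV: "K \<subseteq> V" and KR: "\<And>y. y \<in> K \<Longrightarrow> N y \<le> R"
  shows "continuous_map (subtopology (product_topology (\<lambda>_. euclideanreal) UNIV) K) euclideanreal g"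
proof (rule cont_real_crit)
  have L: "linear_subspace V" using nsp by (rule ns_ls)
  fix y0 e assume y0: "y0 \<in> topspace (subtopology (product_topology (\<lambda>_. euclideanreal) UNIV) K)" and e: "(e::real) > 0"
  then have y0K: "y0 \<in> K" by simp
  have "N y0 \<ge> 0" using nsp KV y0K ns_nonneg by blast
  then have R0: "R \<ge> 0" using KR[OF y0K] by linarith
  define d where "d = e / (2 * (2 * R + 1))"
  have d: "d > 0" using e R0 by (simp add: d_def)
  obtain E where E: "finite E" "\<forall>z\<in>V. (\<forall>i\<in>E. z i = 0) \<longrightarrow> \<bar>g z\<bar> \<le> d * N z" using P[OF d] by blast
  define Cg where "Cg = (\<Sum>j\<in>E. \<bar>g (uvec j)\<bar>)"
  have Cg0: "Cg \<ge> 0" by (simp add: Cg_def sum_nonneg)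
  define t where "t = e / (2 * (Cg + 1))"
  have t: "t > 0" using e Cg0 by (simp add: t_def)
  define W where "W = K \<inter> (\<Pi>\<^sub>E j\<in>UNIV. if j \<in> E then ball (y0 j) t else UNIV)"
  have "openin (product_topology (\<lambda>_. euclideanreal) UNIV) (\<Pi>\<^sub>E j\<in>UNIV. if j \<in> E then ball (y0 j) t else UNIV)"
    by (subst openin_PiE_gen) (auto intro: finite_subset[OF _ E(1)])
  then have oW: "openin (subtopology (product_topology (\<lambda>_. euclideanreal) UNIV) K) W"
    unfolding W_def by (simp add: openin_subtopology_Int2 inf_commute)
  have y0W: "y0 \<in> W" using y0K t by (simp add: W_def PiE_iff)
  have "\<forall>y\<in>W. \<bar>g y - g y0\<bar> < e"
  proof
    fix y assume yW: "y \<in> W"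
    then have yK: "y \<in> K" by (simp add: W_def)
    have yc: "\<bar>y j - y0 j\<bar> < t" if "j \<in> E" for j
    proof -
      have "y j \<in> (if j \<in> E then ball (y0 j) t else UNIV)" using yW by (auto simp: W_def PiE_iff)
      then show ?thesis using that by (simp add: dist_real_def abs_minus_commute)
    qed
    have yV: "y \<in> V" and y0V: "y0 \<in> V" using yK y0K KV by auto
    define dd where "dd = vdiff y y0"
    have ddV: "dd \<in> V" using vdiff_props(1)[OF nsp yV y0V] dd_def by simp
    have Ndd: "N dd \<le> 2 * R" using vdiff_props(2)[OF nsp yV y0V] KR[OF yK] KR[OF y0K] dd_def by simp
    have rE: "restr E dd \<in> V" and grE: "g (restr E dd) = (\<Sum>j\<in>E. dd j * g (uvec j))"
      using fin_comb[OF L u g E(1), of dd] restr_fin[OF E(1), of dd] by auto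
    define z where "z = vdiff dd (restr E dd)"
    have zV: "z \<in> V" using vdiff_props(1)[OF nsp ddV rE] z_def by simp
    have z0: "\<forall>i\<in>E. z i = 0" by (simp add: z_def vdiff_def restr_def)
    have Nz: "N z \<le> 2 * R" using rn[OF ddV E(1)] Ndd z_def by simp
    have "\<bar>g z\<bar> \<le> d * N z" using E(2) zV z0 by blast
    also have "\<dots> \<le> d * (2 * R)" using Nz d by (simp add: mult_left_mono)
    also have "\<dots> < e / 2" using e R0 by (simp add: d_def field_simps)
    finally have gz: "\<bar>g z\<bar> < e / 2" .
    have "\<bar>g (restr E dd)\<bar> \<le> (\<Sum>j\<in>E. \<bar>dd j * g (uvec j)\<bar>)" unfolding grE by (rule sum_abs)
    also have "\<dots> \<le> (\<Sum>j\<in>E. t * \<bar>g (uvec j)\<bar>)"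
    proof (rule sum_mono)
      fix j assume "j \<in> E"
      then have "\<bar>dd j\<bar> \<le> t" using yc by (simp add: dd_def vdiff_def less_imp_le)
      then show "\<bar>dd j * g (uvec j)\<bar> \<le> t * \<bar>g (uvec j)\<bar>" by (simp add: abs_mult mult_right_mono)
    qed
    also have "\<dots> = t * Cg" by (simp add: Cg_def sum_distrib_left)
    also have "\<dots> < e / 2" using e Cg0 by (simp add: t_def field_simps)
    finally have gr: "\<bar>g (restr E dd)\<bar> < e / 2" .
    have "dd = vadd (restr E dd) z" by (simp add: z_def vadd_def vdiff_def)
    then have "g dd = g (restr E dd) + g z" using blf_add[OF g rE zV] by simp
    moreover have "g dd = g y - g y0" using vdiff_g[OF L g yV y0V] dd_def by simp
    ultimately show "\<bar>g y - g y0\<bar> < e" using gz gr by linarith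
  qed
  then show "\<exists>W. openin (subtopology (product_topology (\<lambda>_. euclideanreal) UNIV) K) W \<and> y0 \<in> W \<and> (\<forall>y\<in>W. \<bar>g y - g y0\<bar> < e)"
    using oW y0W by blast
qed




lemma blf_zero: "bounded_linear_functional_on V N (\<lambda>_. 0)"
  unfolding bounded_linear_functional_on_def
proof (intro conjI)
  show "\<exists>C. \<forall>x\<in>V. \<bar>(\<lambda>_. 0::real) x\<bar> \<le> C * N x" by (rule exI[of _ 0]) simp
qed simp_all

lemma blf_coord:
  assumes "\<And>y. y \<in> V \<Longrightarrow> \<bar>y i\<bar> \<le> N y"
  shows "bounded_linear_functional_on V N (\<lambda>v. v i)"
  unfolding bounded_linear_functional_on_def
proof (intro conjI)
  show "\<exists>C. \<forall>x\<in>V. \<bar>x i\<bar> \<le> C * N x" by (rule exI[of _ 1]) (simp add: assms)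
qed (simp_all add: vadd_def vscale_def)

lemma weak_basis_mem:
  assumes "bounded_linear_functional_on V N f" "open U"
  shows "{x \<in> V. f x \<in> U} \<in> {{x \<in> V. f x \<in> U} | f U. bounded_linear_functional_on V N f \<and> open U}"
  using assms by blast

lemma topspace_weak: "topspace (weak_topology V N) = V"
proof -
  have "{x \<in> V. (\<lambda>_. 0::real) x \<in> UNIV} \<in> {{x \<in> V. f x \<in> U} | f U. bounded_linear_functional_on V N f \<and> open U}"
    by (rule weak_basis_mem[OF blf_zero]) simp
  then have "V \<in> {{x \<in> V. f x \<in> U} | f U. bounded_linear_functional_on V N f \<and> open U}" by simp
  then show ?thesis unfolding weak_topology_def topology_generated_by_topspace by blast
qed

lemma openin_weak_coord:
  assumes "\<And>y. y \<in> V \<Longrightarrow> \<bar>y i\<bar> \<le> N y" "open U"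
  shows "openin (weak_topology V N) {v \<in> V. v i \<in> U}"
  unfolding weak_topology_def
  by (rule topology_generated_by_Basis, rule weak_basis_mem[OF blf_coord[OF assms(1)] assms(2)])

lemma embed_generic:
  fixes \<phi> :: "'a \<Rightarrow> ('i \<Rightarrow> real)"
  assumes nsp: "normed_space_on V N" and u: "\<And>j. uvec j \<in> V"
    and coord: "\<And>y i. y \<in> V \<Longrightarrow> \<bar>y i\<bar> \<le> N y"
    and P: "\<And>g d. bounded_linear_functional_on V N g \<Longrightarrow> d > 0 \<Longrightarrow>
               \<exists>E. finite E \<and> (\<forall>z\<in>V. (\<forall>i\<in>E. z i = 0) \<longrightarrow> \<bar>g z\<bar> \<le> d * N z)"
    and rn: "\<And>y E. y \<in> V \<Longrightarrow> finite E \<Longrightarrow> N (vdiff y (restr E y)) \<le> N y"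
    and KV: "K \<subseteq> V" and KR: "\<And>y. y \<in> K \<Longrightarrow> N y \<le> R"
    and Kc: "compactin (product_topology (\<lambda>_. euclideanreal) UNIV) K"
    and phic: "continuous_map X (product_topology (\<lambda>_. euclideanreal) UNIV) \<phi>"
    and phiK: "\<phi> ` topspace X \<subseteq> K"
    and sep: "\<And>Op x. openin X Op \<Longrightarrow> x \<in> Op \<Longrightarrow> \<exists>i. 0 < \<phi> x i \<and> (\<forall>y\<in>topspace X. 0 < \<phi> y i \<longrightarrow> y \<in> Op)"
    and inj: "inj_on \<phi> (topspace X)"
  shows "compactin (weak_topology V N) K \<and> embedding_map X (subtopology (weak_topology V N) K) \<phi>"
proof -
  let ?P = "product_topology (\<lambda>_::'i. euclideanreal) UNIV"
  let ?W = "weak_topology V N"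
  have idc: "continuous_map (subtopology ?P K) ?W id"
    unfolding weak_topology_def
  proof (rule continuous_on_generated_topo)
    fix U assume "U \<in> {{x \<in> V. f x \<in> U} | f U. bounded_linear_functional_on V N f \<and> open U}"
    then obtain f Op where U: "U = {x \<in> V. f x \<in> Op}" and f: "bounded_linear_functional_on V N f" and Op: "open Op"
      by blast
    have fc: "continuous_map (subtopology ?P K) euclideanreal f"
      by (rule weak_cont_prod[OF nsp u f P[OF f] rn KV KR]) auto
    have "openin (subtopology ?P K) {x \<in> topspace (subtopology ?P K). f x \<in> Op}"
      using fc Op unfolding continuous_map_def by simp
    moreover have "{x \<in> topspace (subtopology ?P K). f x \<in> Op} = id -` U \<inter> topspace (subtopology ?P K)"
      using KV by (auto simp: U)
    ultimately show "openin (subtopology ?P K) (id -` U \<inter> topspace (subtopology ?P K))" by simp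
  next
    have "V \<subseteq> \<Union> {{x \<in> V. f x \<in> U} | f U. bounded_linear_functional_on V N f \<and> open U}"
      using topspace_weak[of V N] unfolding weak_topology_def topology_generated_by_topspace by simp
    then show "id ` topspace (subtopology ?P K) \<subseteq> \<Union> {{x \<in> V. f x \<in> U} | f U. bounded_linear_functional_on V N f \<and> open U}"
      using KV by auto
  qed
  have cK: "compactin ?W K"
  proof -
    have "compactin (subtopology ?P K) K" using Kc by (simp add: compactin_subtopology)
    from image_compactin[OF this idc] show ?thesis by simp
  qed
  have phiW: "continuous_map X ?W \<phi>"
  proof -
    have "continuous_map X (subtopology ?P K) \<phi>" using phic phiK by (auto simp: continuous_map_in_subtopology)
    from continuous_map_compose[OF this idc] show ?thesis by (simp add: o_def)
  qed
  let ?I = "\<phi> ` topspace X"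
  have top: "topspace (subtopology (subtopology ?W K) ?I) = ?I"
    using phiK KV by (auto simp: topspace_weak)
  have "homeomorphic_map X (subtopology (subtopology ?W K) ?I) \<phi>"
  proof (rule bijective_open_imp_homeomorphic_map)
    show "continuous_map X (subtopology (subtopology ?W K) ?I) \<phi>"
      using phiW phiK by (auto simp: continuous_map_in_subtopology)
    show "\<phi> ` topspace X = topspace (subtopology (subtopology ?W K) ?I)" using top by simp
    show "inj_on \<phi> (topspace X)" by (rule inj)
    show "open_map X (subtopology (subtopology ?W K) ?I) \<phi>"
      unfolding open_map_def
    proof (intro allI impI)
      fix Op assume Op: "openin X Op"
      define ix where "ix x = (SOME i. 0 < \<phi> x i \<and> (\<forall>y\<in>topspace X. 0 < \<phi> y i \<longrightarrow> y \<in> Op))" for x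
      have ix: "0 < \<phi> x (ix x) \<and> (\<forall>y\<in>topspace X. 0 < \<phi> y (ix x) \<longrightarrow> y \<in> Op)" if "x \<in> Op" for x
        unfolding ix_def by (rule someI_ex) (rule sep[OF Op that])
      define T where "T = (\<Union>x\<in>Op. {v \<in> V. v (ix x) \<in> {0<..}})"
      have oc: "openin ?W {v \<in> V. v i \<in> {0<..}}" for i
        by (rule openin_weak_coord[OF coord]) auto
      have oT: "openin ?W T" unfolding T_def
        by (rule openin_Union) (use oc in blast)
      have OX: "Op \<subseteq> topspace X" using Op openin_subset by blast
      have "\<phi> ` Op = T \<inter> (K \<inter> ?I)"
      proof
        show "\<phi> ` Op \<subseteq> T \<inter> (K \<inter> ?I)"
        proof
          fix w assume "w \<in> \<phi> ` Op"
          then obtain x where x: "x \<in> Op" "w = \<phi> x" by blast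
          then have "\<phi> x \<in> K" using OX phiK by blast
          moreover have "\<phi> x \<in> {v \<in> V. v (ix x) \<in> {0<..}}" using ix[OF x(1)] KV \<open>\<phi> x \<in> K\<close> by auto
          ultimately show "w \<in> T \<inter> (K \<inter> ?I)" using x OX unfolding T_def by blast
        qed
        show "T \<inter> (K \<inter> ?I) \<subseteq> \<phi> ` Op"
        proof
          fix w assume w: "w \<in> T \<inter> (K \<inter> ?I)"
          then obtain y where y: "y \<in> topspace X" "w = \<phi> y" by blast
          from w obtain x where "x \<in> Op" "0 < w (ix x)" unfolding T_def by auto
          then have "y \<in> Op" using ix y by blast
          then show "w \<in> \<phi> ` Op" using y by blast
        qed
      qed
      then show "openin (subtopology (subtopology ?W K) ?I) (\<phi> ` Op)"
        unfolding subtopology_subtopology openin_subtopology using oT by blast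
    qed
  qed
  moreover have "K \<inter> ?I = ?I" using phiK by blast
  ultimately have "homeomorphic_map X (subtopology ?W ?I) \<phi>" by (metis subtopology_subtopology)
  then have "embedding_map X (subtopology ?W K) \<phi>"
    unfolding embedding_map_def subtopology_subtopology using \<open>K \<inter> ?I = ?I\<close> by metis
  then show ?thesis using cK by blast
qed




definition l2 :: "('i \<Rightarrow> real) set" where
  "l2 = {y. (\<lambda>i. (y i)\<^sup>2) summable_on UNIV}"

definition ip2 :: "('i \<Rightarrow> real) \<Rightarrow> ('i \<Rightarrow> real) \<Rightarrow> real" where
  "ip2 x y = infsum (\<lambda>i. x i * y i) UNIV"

definition N2 :: "('i \<Rightarrow> real) \<Rightarrow> real" where
  "N2 x = sqrt (ip2 x x)"

lemma l2_sq: "y \<in> l2 \<Longrightarrow> (\<lambda>i. y i * y i) summable_on UNIV"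
  unfolding l2_def by (simp add: power2_eq_square)

lemma l2_prod:
  assumes x: "x \<in> l2" and y: "y \<in> l2"
  shows "(\<lambda>i. x i * y i) summable_on UNIV"
proof -
  have s0: "(\<lambda>i. (1/2) * ((x i)\<^sup>2 + (y i)\<^sup>2)) summable_on UNIV"
    using summable_on_cmult_right[OF summable_on_add[OF x[unfolded l2_def, simplified] y[unfolded l2_def, simplified]]] .
  have s: "(\<lambda>i. ((x i)\<^sup>2 + (y i)\<^sup>2) / 2) summable_on UNIV"
    using s0 by simp
  have "(\<lambda>i. \<bar>x i * y i\<bar>) summable_on UNIV"
  proof (rule summable_on_comparison_test[OF s])
    fix i
    have "0 \<le> (\<bar>x i\<bar> - \<bar>y i\<bar>)\<^sup>2" by simp
    then show "\<bar>x i * y i\<bar> \<le> ((x i)\<^sup>2 + (y i)\<^sup>2) / 2"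
      by (simp add: power2_eq_square abs_mult algebra_simps)
  qed simp
  then show ?thesis by (subst summable_on_iff_abs_summable_on_real) simp
qed

lemma l2_dom:
  assumes y: "y \<in> l2" and le: "\<And>i. \<bar>z i\<bar> \<le> \<bar>y i\<bar>"
  shows "z \<in> l2" "ip2 z z \<le> ip2 y y"
proof -
  have le2: "(z i)\<^sup>2 \<le> (y i)\<^sup>2" for i using le[of i] by (simp add: abs_le_square_iff)
  have ys: "(\<lambda>i. (y i)\<^sup>2) summable_on UNIV" using y by (simp add: l2_def)
  have zs: "(\<lambda>i. (z i)\<^sup>2) summable_on UNIV"
    by (rule summable_on_comparison_test[OF ys]) (use le2 in auto)
  then show "z \<in> l2" by (simp add: l2_def)
  have "infsum (\<lambda>i. (z i)\<^sup>2) UNIV \<le> infsum (\<lambda>i. (y i)\<^sup>2) UNIV"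
    by (rule infsum_mono[OF zs ys]) (use le2 in auto)
  then show "ip2 z z \<le> ip2 y y" by (simp add: ip2_def power2_eq_square)
qed

lemma l2_zero: "(\<lambda>t. 0) \<in> l2" by (simp add: l2_def)

lemma l2_scale: "x \<in> l2 \<Longrightarrow> vscale c x \<in> l2"
  unfolding l2_def vscale_def by (simp add: power_mult_distrib summable_on_cmult_right)

lemma l2_add:
  assumes x: "x \<in> l2" and y: "y \<in> l2"
  shows "vadd x y \<in> l2"
proof -
  have s: "(\<lambda>i. 2 * (x i)\<^sup>2 + 2 * (y i)\<^sup>2) summable_on UNIV"
    using summable_on_add[OF summable_on_cmult_right[OF x[unfolded l2_def, simplified]]
        summable_on_cmult_right[OF y[unfolded l2_def, simplified]]] by simp
  have "(\<lambda>i. (x i + y i)\<^sup>2) summable_on UNIV"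
  proof (rule summable_on_comparison_test[OF s])
    fix i
    have "0 \<le> (x i - y i)\<^sup>2" by simp
    then show "(x i + y i)\<^sup>2 \<le> 2 * (x i)\<^sup>2 + 2 * (y i)\<^sup>2"
      by (simp add: power2_eq_square algebra_simps)
  qed simp
  then show ?thesis by (simp add: l2_def vadd_def)
qed

lemma l2_ls: "linear_subspace l2"
  unfolding linear_subspace_def using l2_zero l2_add l2_scale by blast

lemma ip2_sym: "ip2 x y = ip2 y x" by (simp add: ip2_def mult.commute)

lemma ip2_add: "x \<in> l2 \<Longrightarrow> y \<in> l2 \<Longrightarrow> z \<in> l2 \<Longrightarrow> ip2 (vadd x y) z = ip2 x z + ip2 y z"
  unfolding ip2_def vadd_def by (simp add: distrib_right infsum_add l2_prod)

lemma ip2_scale: "x \<in> l2 \<Longrightarrow> y \<in> l2 \<Longrightarrow> ip2 (vscale c x) y = c * ip2 x y"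
  unfolding ip2_def vscale_def by (simp add: mult.assoc infsum_cmult_right l2_prod)

lemma ip2_nonneg: "ip2 x x \<ge> 0"
  unfolding ip2_def by (rule infsum_nonneg) simp

lemma ip2_zero: assumes "x \<in> l2" "ip2 x x = 0" shows "x = (\<lambda>t. 0)"
proof
  fix i
  have "x i * x i = 0"
    by (rule nonneg_infsum_le_0D[of "\<lambda>i. x i * x i" UNIV]) (use assms in \<open>auto simp: ip2_def l2_sq\<close>)
  then show "x i = 0" by simp
qed

lemma ip2_CS:
  assumes x: "x \<in> l2" and y: "y \<in> l2"
  shows "(ip2 x y)\<^sup>2 \<le> ip2 x x * ip2 y y"
proof (cases "ip2 y y = 0")
  case True
  then have "y = (\<lambda>t. 0)" using ip2_zero y by blast
  then show ?thesis by (simp add: ip2_def)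
next
  case False
  then have p: "ip2 y y > 0" using ip2_nonneg[of y] by linarith
  define t where "t = ip2 x y / ip2 y y"
  have w: "vadd x (vscale (- t) y) \<in> l2" using x y l2_add l2_scale by blast
  have "0 \<le> ip2 (vadd x (vscale (- t) y)) (vadd x (vscale (- t) y))" by (rule ip2_nonneg)
  also have "\<dots> = ip2 x x - 2 * t * ip2 x y + t\<^sup>2 * ip2 y y"
  proof -
    have sy: "vscale (- t) y \<in> l2" using y l2_scale by blast
    have "ip2 (vadd x (vscale (- t) y)) (vadd x (vscale (- t) y))
        = ip2 x (vadd x (vscale (- t) y)) + ip2 (vscale (- t) y) (vadd x (vscale (- t) y))"
      using ip2_add[OF x sy w] .
    also have "\<dots> = ip2 (vadd x (vscale (- t) y)) x + (- t) * ip2 (vadd x (vscale (- t) y)) y"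
      using ip2_scale[OF y w] by (simp add: ip2_sym)
    also have "\<dots> = (ip2 x x + (- t) * ip2 y x) + (- t) * (ip2 x y + (- t) * ip2 y y)"
      using ip2_add[OF x sy x] ip2_add[OF x sy y] ip2_scale[OF y x] ip2_scale[OF y y] by simp
    finally show ?thesis by (simp add: ip2_sym[of y x] power2_eq_square algebra_simps)
  qed
  also have "\<dots> = ip2 x x - (ip2 x y)\<^sup>2 / ip2 y y"
  proof -
    have tb: "t * ip2 y y = ip2 x y" using p by (simp add: t_def)
    have "t\<^sup>2 * ip2 y y = t * ip2 x y" using tb by (simp add: power2_eq_square mult.assoc)
    moreover have "t * ip2 x y = (ip2 x y)\<^sup>2 / ip2 y y" by (simp add: t_def power2_eq_square)
    ultimately show ?thesis by linarith
  qed
  finally have "(ip2 x y)\<^sup>2 / ip2 y y \<le> ip2 x x" by linarith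
  then show ?thesis using pos_divide_le_eq[OF p] by simp
qed

lemma N2_nonneg: "N2 x \<ge> 0" using ip2_nonneg[of x] by (simp add: N2_def)

lemma ip2_le_N2: "x \<in> l2 \<Longrightarrow> y \<in> l2 \<Longrightarrow> ip2 x y \<le> N2 x * N2 y"
proof -
  assume x: "x \<in> l2" and y: "y \<in> l2"
  have "\<bar>ip2 x y\<bar> = sqrt ((ip2 x y)\<^sup>2)" by simp
  also have "\<dots> \<le> sqrt (ip2 x x * ip2 y y)" using ip2_CS[OF x y] by (rule real_sqrt_le_mono)
  also have "\<dots> = N2 x * N2 y" using ip2_nonneg[of x] ip2_nonneg[of y] by (simp add: N2_def real_sqrt_mult)
  finally show ?thesis by simp
qed

lemma N2_tri:
  assumes x: "x \<in> l2" and y: "y \<in> l2"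
  shows "N2 (vadd x y) \<le> N2 x + N2 y"
proof -
  have a: "ip2 (vadd x y) (vadd x y) = ip2 x x + 2 * ip2 x y + ip2 y y"
  proof -
    have "ip2 (vadd x y) (vadd x y) = ip2 x (vadd x y) + ip2 y (vadd x y)" using ip2_add[OF x y l2_add[OF x y]] .
    also have "ip2 x (vadd x y) = ip2 x x + ip2 y x" using ip2_add[OF x y x] ip2_sym[of x "vadd x y"] by simp
    also have "ip2 y (vadd x y) = ip2 x y + ip2 y y" using ip2_add[OF x y y] ip2_sym[of y "vadd x y"] by simp
    finally show ?thesis using ip2_sym[of y x] by simp
  qed
  have nx: "(N2 x)\<^sup>2 = ip2 x x" using ip2_nonneg[of x] by (simp add: N2_def)
  have ny: "(N2 y)\<^sup>2 = ip2 y y" using ip2_nonneg[of y] by (simp add: N2_def)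
  have "(N2 x + N2 y)\<^sup>2 = (N2 x)\<^sup>2 + (N2 y)\<^sup>2 + 2 * N2 x * N2 y" by (rule power2_sum)
  then have "ip2 (vadd x y) (vadd x y) \<le> (N2 x + N2 y)\<^sup>2"
    using ip2_le_N2[OF x y] unfolding a nx ny by linarith
  then have "sqrt (ip2 (vadd x y) (vadd x y)) \<le> sqrt ((N2 x + N2 y)\<^sup>2)" by (rule real_sqrt_le_mono)
  then show ?thesis using N2_nonneg[of x] N2_nonneg[of y] by (simp add: N2_def)
qed

lemma N2_scale: assumes x: "x \<in> l2" shows "N2 (vscale c x) = \<bar>c\<bar> * N2 x"
proof -
  have "ip2 (vscale c x) (vscale c x) = c * ip2 x (vscale c x)" using ip2_scale[OF x l2_scale[OF x]] .
  also have "ip2 x (vscale c x) = c * ip2 x x" using ip2_scale[OF x x, of c] by (simp add: ip2_sym)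
  finally have "ip2 (vscale c x) (vscale c x) = c\<^sup>2 * ip2 x x" by (simp add: power2_eq_square)
  then have "sqrt (ip2 (vscale c x) (vscale c x)) = sqrt (c\<^sup>2) * sqrt (ip2 x x)" by (simp only: real_sqrt_mult)
  then show ?thesis unfolding N2_def by simp
qed

lemma l2_normed: "normed_space_on l2 N2"
  unfolding normed_space_on_def
proof (intro conjI ballI allI impI)
  show "linear_subspace l2" by (rule l2_ls)
  show "0 \<le> N2 x" for x by (rule N2_nonneg)
  show "x = (\<lambda>t. 0)" if "x \<in> l2" "N2 x = 0" for x
    using ip2_zero[OF that(1)] that(2) ip2_nonneg[of x] by (simp add: N2_def)
  show "N2 (vscale c x) = \<bar>c\<bar> * N2 x" if "x \<in> l2" for c x using N2_scale[OF that] .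
  show "N2 (vadd x y) \<le> N2 x + N2 y" if "x \<in> l2" "y \<in> l2" for x y using N2_tri[OF that] .
qed

lemma l2_coord: assumes "y \<in> l2" shows "\<bar>y i\<bar> \<le> N2 y"
proof -
  have "sum (\<lambda>i. y i * y i) {i} \<le> infsum (\<lambda>i. y i * y i) UNIV"
    by (rule finite_sum_le_infsum) (use l2_sq[OF assms] in simp_all)
  then have "(y i)\<^sup>2 \<le> ip2 y y" by (simp add: ip2_def power2_eq_square)
  then have "sqrt ((y i)\<^sup>2) \<le> sqrt (ip2 y y)" by (rule real_sqrt_le_mono)
  then show ?thesis by (simp add: N2_def)
qed




lemma l2_finsupp:
  assumes S: "finite S" and z: "\<And>i. i \<notin> S \<Longrightarrow> z i = 0"
  shows "z \<in> l2" "ip2 z z = (\<Sum>i\<in>S. z i * z i)"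
proof -
  have "(\<lambda>i. z i * z i) summable_on UNIV \<longleftrightarrow> (\<lambda>i. z i * z i) summable_on S"
    by (rule summable_on_cong_neutral) (use z in auto)
  then show "z \<in> l2" using S by (simp add: l2_def power2_eq_square)
  have "infsum (\<lambda>i. z i * z i) UNIV = infsum (\<lambda>i. z i * z i) S"
    by (rule infsum_cong_neutral) (use z in auto)
  then show "ip2 z z = (\<Sum>i\<in>S. z i * z i)" using S by (simp add: ip2_def)
qed

lemma uvec_l2: "uvec j \<in> l2"
  by (rule l2_finsupp(1)[of "{j}"]) (auto simp: uvec_def)

lemma N2_mono: assumes "y \<in> l2" "\<And>i. \<bar>z i\<bar> \<le> \<bar>y i\<bar>" shows "z \<in> l2" "N2 z \<le> N2 y"
  using l2_dom[OF assms] by (auto simp: N2_def intro: real_sqrt_le_mono)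

lemma l2_rn: "y \<in> l2 \<Longrightarrow> N2 (vdiff y (restr E y)) \<le> N2 y"
  by (rule N2_mono(2)) (auto simp: vdiff_def restr_def)

lemma l2_tail:
  assumes y: "y \<in> l2" and e: "e > 0"
  shows "\<exists>F. finite F \<and> N2 (vdiff y (restr F y)) \<le> e"
proof -
  obtain F where F: "finite F" "dist (sum (\<lambda>i. y i * y i) F) (infsum (\<lambda>i. y i * y i) UNIV) \<le> e\<^sup>2"
    using infsum_finite_approximation[OF l2_sq[OF y], of "e\<^sup>2"] e by auto
  define d where "d = vdiff y (restr F y)"
  define r where "r = restr F y"
  have dl: "d \<in> l2" using N2_mono(1)[OF y, of d] by (auto simp: d_def vdiff_def restr_def)
  have rl: "r \<in> l2" "ip2 r r = (\<Sum>i\<in>F. y i * y i)"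
    using l2_finsupp[OF F(1), of r] by (auto simp: r_def restr_def)
  have "(\<lambda>i. y i * y i) = (\<lambda>i. d i * d i + r i * r i)"
    by (auto simp: d_def r_def vdiff_def restr_def fun_eq_iff)
  then have "infsum (\<lambda>i. y i * y i) UNIV = ip2 d d + ip2 r r"
    using infsum_add[OF l2_sq[OF dl] l2_sq[OF rl(1)]] by (simp add: ip2_def)
  then have "ip2 d d \<le> e\<^sup>2" using F(2) rl(2) by (simp add: dist_real_def)
  then have "sqrt (ip2 d d) \<le> sqrt (e\<^sup>2)" by (rule real_sqrt_le_mono)
  then show ?thesis using F(1) e by (auto simp: N2_def d_def)
qed

lemma l2_P:
  assumes g: "bounded_linear_functional_on l2 N2 g" and d: "dl > 0"
  shows "\<exists>E. finite E \<and> (\<forall>z\<in>l2. (\<forall>i\<in>E. z i = 0) \<longrightarrow> \<bar>g z\<bar> \<le> dl * N2 z)"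
proof -
  obtain C where C: "\<And>x. x \<in> l2 \<Longrightarrow> \<bar>g x\<bar> \<le> C * N2 x"
    using g unfolding bounded_linear_functional_on_def by blast
  define c where "c j = g (uvec j)" for j
  have fc: "g (restr S w) = (\<Sum>j\<in>S. w j * c j) \<and> restr S w \<in> l2" if "finite S" for S w
    using fin_comb[OF l2_ls uvec_l2 g that, of w] restr_fin[OF that, of w] by (simp add: c_def)
  have bd: "(\<Sum>j\<in>S. c j * c j) \<le> C\<^sup>2" if S: "finite S" for S
  proof -
    define s where "s = (\<Sum>j\<in>S. c j * c j)"
    have s0: "s \<ge> 0" by (simp add: s_def sum_nonneg)
    have "ip2 (restr S c) (restr S c) = (\<Sum>j\<in>S. restr S c j * restr S c j)"
      by (rule l2_finsupp(2)[OF S]) (simp add: restr_def)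
    then have "N2 (restr S c) = sqrt s" by (simp add: N2_def s_def restr_def)
    moreover have "g (restr S c) = s" using fc[OF S, of c] by (simp add: s_def)
    ultimately have le: "s \<le> C * sqrt s" using C[of "restr S c"] fc[OF S, of c] s0 by simp
    show ?thesis
    proof (cases "s = 0")
      case True then show ?thesis by (simp add: s_def[symmetric])
    next
      case False
      then have sp: "sqrt s > 0" using s0 by simp
      have "sqrt s * sqrt s = s" using s0 by simp
      then have "sqrt s * sqrt s \<le> C * sqrt s" using le by simp
      then have "sqrt s \<le> C" using mult_le_cancel_right_pos[OF sp] by blast
      then have "(sqrt s)\<^sup>2 \<le> C\<^sup>2" using sp by (intro power_mono) auto
      then show ?thesis using s0 by (simp add: s_def)
    qed
  qed
  have cs: "(\<lambda>j. c j * c j) summable_on UNIV"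
    by (rule nonneg_bdd_above_summable_on) (use bd in \<open>auto intro!: bdd_aboveI2\<close>)
  obtain E where E: "finite E" "dist (sum (\<lambda>j. c j * c j) E) (infsum (\<lambda>j. c j * c j) UNIV) \<le> dl\<^sup>2"
    using infsum_finite_approximation[OF cs, of "dl\<^sup>2"] d by auto
  have small: "(\<Sum>j\<in>S. c j * c j) \<le> dl\<^sup>2" if S: "finite S" "S \<inter> E = {}" for S
  proof -
    have "(\<Sum>j\<in>S \<union> E. c j * c j) \<le> infsum (\<lambda>j. c j * c j) UNIV"
      by (rule finite_sum_le_infsum[OF cs]) (use S E in auto)
    moreover have "(\<Sum>j\<in>S \<union> E. c j * c j) = (\<Sum>j\<in>S. c j * c j) + (\<Sum>j\<in>E. c j * c j)"
      using S E by (simp add: sum.union_disjoint)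
    ultimately show ?thesis using E(2) by (simp add: dist_real_def)
  qed
  have "\<forall>z\<in>l2. (\<forall>i\<in>E. z i = 0) \<longrightarrow> \<bar>g z\<bar> \<le> dl * N2 z"
  proof (intro ballI impI)
    fix z assume z: "z \<in> l2" and zE: "\<forall>i\<in>E. z i = 0"
    show "\<bar>g z\<bar> \<le> dl * N2 z"
    proof (rule field_le_epsilon)
      fix eta :: real assume eta: "eta > 0"
      define et where "et = eta / (\<bar>C\<bar> + 1)"
      have et: "et > 0" using eta by (simp add: et_def)
      obtain F where F: "finite F" "N2 (vdiff z (restr F z)) \<le> et" using l2_tail[OF z et] by blast
      have rF: "restr F z \<in> l2" "g (restr F z) = (\<Sum>j\<in>F. z j * c j)" using fc[OF F(1)] by auto
      have dV: "vdiff z (restr F z) \<in> l2" using vdiff_props(1)[OF l2_normed z rF(1)] .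
      have "z = vadd (restr F z) (vdiff z (restr F z))" by (simp add: vadd_def vdiff_def)
      then have gz: "g z = g (restr F z) + g (vdiff z (restr F z))" using blf_add[OF g rF(1) dV] by simp
      have "\<bar>g (vdiff z (restr F z))\<bar> \<le> C * N2 (vdiff z (restr F z))" using C[OF dV] .
      also have "\<dots> \<le> \<bar>C\<bar> * et" using F(2) N2_nonneg[of "vdiff z (restr F z)"]
        by (metis abs_ge_self abs_ge_zero mult_mono order_trans)
      also have "\<dots> \<le> eta" using eta by (simp add: et_def field_simps)
      finally have g1: "\<bar>g (vdiff z (restr F z))\<bar> \<le> eta" .
      have "(\<Sum>j\<in>F. z j * c j) = (\<Sum>j\<in>F - E. z j * c j)"
        by (rule sum.mono_neutral_right) (use F zE in auto)
      then have "\<bar>g (restr F z)\<bar> = \<bar>\<Sum>j\<in>F - E. z j * c j\<bar>" using rF by simp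
      also have "\<dots> = sqrt ((\<Sum>j\<in>F - E. z j * c j)\<^sup>2)" by simp
      also have "\<dots> \<le> sqrt ((\<Sum>j\<in>F - E. (z j)\<^sup>2) * (\<Sum>j\<in>F - E. (c j)\<^sup>2))"
        by (rule real_sqrt_le_mono, rule Cauchy_Schwarz_ineq_sum)
      also have "\<dots> = sqrt (\<Sum>j\<in>F - E. (z j)\<^sup>2) * sqrt (\<Sum>j\<in>F - E. (c j)\<^sup>2)" by (simp add: real_sqrt_mult)
      also have "\<dots> \<le> N2 z * dl"
      proof (rule mult_mono)
        have "(\<Sum>j\<in>F - E. z j * z j) \<le> infsum (\<lambda>j. z j * z j) UNIV"
          by (rule finite_sum_le_infsum[OF l2_sq[OF z]]) (use F in auto)
        then show "sqrt (\<Sum>j\<in>F - E. (z j)\<^sup>2) \<le> N2 z"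
          unfolding N2_def ip2_def power2_eq_square by (rule real_sqrt_le_mono)
        have "(\<Sum>j\<in>F - E. c j * c j) \<le> dl\<^sup>2" by (rule small) (use F in auto)
        then have "sqrt (\<Sum>j\<in>F - E. (c j)\<^sup>2) \<le> sqrt (dl\<^sup>2)" unfolding power2_eq_square[of "c _"]
          by (rule real_sqrt_le_mono)
        then show "sqrt (\<Sum>j\<in>F - E. (c j)\<^sup>2) \<le> dl" using d by simp
      qed (simp_all add: N2_nonneg sum_nonneg)
      finally have g2: "\<bar>g (restr F z)\<bar> \<le> dl * N2 z" by (simp add: mult.commute)
      show "\<bar>g z\<bar> \<le> dl * N2 z + eta" using gz g1 g2 by linarith
    qed
  qed
  then show ?thesis using E(1) by blast
qed




lemma l2_complete: "banach_space_on l2 N2"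
  unfolding banach_space_on_def
proof (intro conjI allI impI)
  show "normed_space_on l2 N2" by (rule l2_normed)
  fix s :: "nat \<Rightarrow> ('a \<Rightarrow> real)"
  assume a: "(\<forall>n. s n \<in> l2) \<and> (\<forall>e>0. \<exists>M. \<forall>m\<ge>M. \<forall>n\<ge>M. N2 (vdiff (s m) (s n)) < e)"
  then have sV: "\<And>n. s n \<in> l2" and cau: "\<And>e. e > 0 \<Longrightarrow> \<exists>M. \<forall>m\<ge>M. \<forall>n\<ge>M. N2 (vdiff (s m) (s n)) < e"
    by auto
  have dV: "vdiff (s m) (s n) \<in> l2" for m n using vdiff_props(1)[OF l2_normed sV sV] .
  have pc: "Cauchy (\<lambda>n. s n i)" for i
    unfolding Cauchy_iff
  proof (intro allI impI)
    fix e :: real assume e: "e > 0"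
    obtain M where M: "\<forall>m\<ge>M. \<forall>n\<ge>M. N2 (vdiff (s m) (s n)) < e" using cau[OF e] by blast
    have "\<forall>m\<ge>M. \<forall>n\<ge>M. norm (s m i - s n i) < e"
    proof (intro allI impI)
      fix m n assume "m \<ge> M" "n \<ge> M"
      then have "N2 (vdiff (s m) (s n)) < e" using M by blast
      moreover have "\<bar>vdiff (s m) (s n) i\<bar> \<le> N2 (vdiff (s m) (s n))" using l2_coord[OF dV] .
      ultimately show "norm (s m i - s n i) < e" by (simp add: vdiff_def)
    qed
    then show "\<exists>M. \<forall>m\<ge>M. \<forall>n\<ge>M. norm (s m i - s n i) < e" by blast
  qed
  define x where "x i = lim (\<lambda>n. s n i)" for i
  have conv: "(\<lambda>n. s n i) \<longlonglongrightarrow> x i" for i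
    using pc[of i] unfolding Cauchy_convergent_iff convergent_LIMSEQ_iff x_def .
  have key: "\<exists>M. \<forall>m\<ge>M. vdiff (s m) x \<in> l2 \<and> N2 (vdiff (s m) x) \<le> e" if e: "e > 0" for e
  proof -
    obtain M where M: "\<forall>m\<ge>M. \<forall>n\<ge>M. N2 (vdiff (s m) (s n)) < e" using cau[OF e] by blast
    have "vdiff (s m) x \<in> l2 \<and> N2 (vdiff (s m) x) \<le> e" if m: "m \<ge> M" for m
    proof -
      define d where "d = vdiff (s m) x"
      have fin: "(\<Sum>i\<in>F. d i * d i) \<le> e\<^sup>2" if F: "finite F" for F
      proof (rule LIMSEQ_le_const2)
        show "(\<lambda>n. \<Sum>i\<in>F. (s m i - s n i) * (s m i - s n i)) \<longlonglongrightarrow> (\<Sum>i\<in>F. d i * d i)"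
          unfolding d_def vdiff_def by (intro tendsto_intros conv)
        show "\<exists>N. \<forall>n\<ge>N. (\<Sum>i\<in>F. (s m i - s n i) * (s m i - s n i)) \<le> e\<^sup>2"
        proof (intro exI allI impI)
          fix n assume n: "n \<ge> M"
          let ?w = "vdiff (s m) (s n)"
          have "(\<Sum>i\<in>F. ?w i * ?w i) \<le> infsum (\<lambda>i. ?w i * ?w i) UNIV"
            by (rule finite_sum_le_infsum[OF l2_sq[OF dV]]) (use F in auto)
          also have "\<dots> = (N2 ?w)\<^sup>2" using ip2_nonneg[of ?w] by (simp add: N2_def ip2_def)
          also have "\<dots> \<le> e\<^sup>2"
          proof -
            have "N2 ?w < e" using M m n by blast
            then show ?thesis using N2_nonneg[of ?w] by (intro power_mono) auto
          qed
          finally show "(\<Sum>i\<in>F. (s m i - s n i) * (s m i - s n i)) \<le> e\<^sup>2" by (simp add: vdiff_def)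
        qed
      qed
      have ds: "(\<lambda>i. d i * d i) summable_on UNIV"
        by (rule nonneg_bdd_above_summable_on) (use fin in \<open>auto intro!: bdd_aboveI2\<close>)
      then have dl: "d \<in> l2" by (simp add: l2_def power2_eq_square)
      have "ip2 d d \<le> e\<^sup>2" unfolding ip2_def by (rule infsum_le_finite_sums[OF ds]) (use fin in auto)
      then have "sqrt (ip2 d d) \<le> sqrt (e\<^sup>2)" by (rule real_sqrt_le_mono)
      then show ?thesis using dl e by (simp add: N2_def d_def)
    qed
    then show ?thesis by blast
  qed
  obtain M where M: "\<forall>m\<ge>M. vdiff (s m) x \<in> l2 \<and> N2 (vdiff (s m) x) \<le> 1" using key[of 1] by auto
  have "x = vdiff (s M) (vdiff (s M) x)" by (simp add: vdiff_def)
  moreover have "vdiff (s M) (vdiff (s M) x) \<in> l2" using vdiff_props(1)[OF l2_normed sV] M by blast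
  ultimately have xl: "x \<in> l2" by simp
  have "(\<lambda>n. N2 (vdiff (s n) x)) \<longlonglongrightarrow> 0"
    unfolding LIMSEQ_iff
  proof (intro allI impI)
    fix r :: real assume r: "r > 0"
    obtain M where MM: "\<forall>m\<ge>M. vdiff (s m) x \<in> l2 \<and> N2 (vdiff (s m) x) \<le> r / 2" using key[of "r/2"] r by auto
    have "\<forall>n\<ge>M. norm (N2 (vdiff (s n) x) - 0) < r"
    proof (intro allI impI)
      fix n assume "n \<ge> M"
      then have "N2 (vdiff (s n) x) \<le> r / 2" using MM by blast
      then show "norm (N2 (vdiff (s n) x) - 0) < r" using r N2_nonneg[of "vdiff (s n) x"] by simp
    qed
    then show "\<exists>no. \<forall>n\<ge>no. norm (N2 (vdiff (s n) x) - 0) < r" by blast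
  qed
  then show "\<exists>x\<in>l2. (\<lambda>n. N2 (vdiff (s n) x)) \<longlonglongrightarrow> 0" using xl by blast
qed

lemma l2_hilbert: "hilbert_space_on l2 ip2"
  unfolding hilbert_space_on_def
proof (intro conjI ballI allI impI)
  show "linear_subspace l2" by (rule l2_ls)
  show "banach_space_on l2 (\<lambda>x. sqrt (ip2 x x))" using l2_complete unfolding N2_def[abs_def] .
  show "ip2 x y = ip2 y x" for x y by (rule ip2_sym)
qed (auto simp: ip2_add ip2_scale ip2_nonneg ip2_zero)




definition c0 :: "('i \<Rightarrow> real) set" where
  "c0 = {y. \<forall>e>0. finite {i. \<bar>y i\<bar> \<ge> e}}"

definition Ns :: "('i \<Rightarrow> real) \<Rightarrow> real" where
  "Ns y = (SUP i. \<bar>y i\<bar>)"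

lemma c0_bdd: assumes "y \<in> c0" shows "bdd_above (range (\<lambda>i. \<bar>y i\<bar>))"
proof -
  have fin: "finite {i. \<bar>y i\<bar> \<ge> 1}" using assms by (simp add: c0_def)
  define B where "B = max 1 (Max ((\<lambda>i. \<bar>y i\<bar>) ` {i. \<bar>y i\<bar> \<ge> 1}))"
  have "\<bar>y i\<bar> \<le> B" for i
  proof (cases "\<bar>y i\<bar> \<ge> 1")
    case True
    then have "\<bar>y i\<bar> \<le> Max ((\<lambda>i. \<bar>y i\<bar>) ` {i. \<bar>y i\<bar> \<ge> 1})" using fin by (intro Max_ge) auto
    then show ?thesis by (simp add: B_def)
  next
    case False then show ?thesis by (simp add: B_def)
  qed
  then show ?thesis by (intro bdd_aboveI2) 
qed

lemma Ns_coord: "y \<in> c0 \<Longrightarrow> \<bar>y i\<bar> \<le> Ns y"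
  unfolding Ns_def by (rule cSUP_upper) (auto intro: c0_bdd)

lemma Ns_le: "(\<And>i. \<bar>y i\<bar> \<le> B) \<Longrightarrow> Ns y \<le> B"
  unfolding Ns_def by (rule cSUP_least) auto

lemma Ns_nonneg: "y \<in> c0 \<Longrightarrow> Ns y \<ge> 0"
  using Ns_coord[of y undefined] by linarith

lemma c0_zero: "(\<lambda>t. 0) \<in> c0" by (simp add: c0_def not_le)

lemma c0_add: assumes x: "x \<in> c0" and y: "y \<in> c0" shows "vadd x y \<in> c0"
  unfolding c0_def vadd_def
proof (intro CollectI allI impI)
  fix e :: real assume e: "e > 0"
  have "{i. \<bar>x i + y i\<bar> \<ge> e} \<subseteq> {i. \<bar>x i\<bar> \<ge> e/2} \<union> {i. \<bar>y i\<bar> \<ge> e/2}" by auto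
  moreover have "finite ({i. \<bar>x i\<bar> \<ge> e/2} \<union> {i. \<bar>y i\<bar> \<ge> e/2})"
  proof -
    have "e/2 > 0" using e by simp
    then show ?thesis using x y unfolding c0_def by blast
  qed
  ultimately show "finite {i. \<bar>x i + y i\<bar> \<ge> e}" by (rule finite_subset)
qed

lemma c0_scale: assumes x: "x \<in> c0" shows "vscale c x \<in> c0"
  unfolding c0_def vscale_def
proof (intro CollectI allI impI)
  fix e :: real assume e: "e > 0"
  show "finite {i. \<bar>c * x i\<bar> \<ge> e}"
  proof (cases "c = 0")
    case True then show ?thesis using e by (simp add: not_le)
  next
    case False
    then have "{i. \<bar>c * x i\<bar> \<ge> e} = {i. \<bar>x i\<bar> \<ge> e / \<bar>c\<bar>}" by (auto simp: abs_mult field_simps)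
    then show ?thesis using x e False by (simp add: c0_def)
  qed
qed

lemma c0_ls: "linear_subspace c0"
  unfolding linear_subspace_def using c0_zero c0_add c0_scale by blast

lemma c0_normed: "normed_space_on c0 Ns"
  unfolding normed_space_on_def
proof (intro conjI ballI allI impI)
  show "linear_subspace c0" by (rule c0_ls)
  show "0 \<le> Ns x" if "x \<in> c0" for x using Ns_nonneg[OF that] .
  show "x = (\<lambda>t. 0)" if "x \<in> c0" "Ns x = 0" for x
    using Ns_coord[OF that(1)] that(2) by fastforce
  show "Ns (vadd x y) \<le> Ns x + Ns y" if "x \<in> c0" "y \<in> c0" for x y
  proof (rule Ns_le)
    fix i show "\<bar>vadd x y i\<bar> \<le> Ns x + Ns y"
      using Ns_coord[OF that(1), of i] Ns_coord[OF that(2), of i] by (simp add: vadd_def)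
  qed
  show "Ns (vscale c x) = \<bar>c\<bar> * Ns x" if x: "x \<in> c0" for c x
  proof (rule antisym)
    show "Ns (vscale c x) \<le> \<bar>c\<bar> * Ns x"
      by (rule Ns_le) (simp add: vscale_def abs_mult Ns_coord[OF x] mult_left_mono)
    show "\<bar>c\<bar> * Ns x \<le> Ns (vscale c x)"
    proof (cases "c = 0")
      case True then show ?thesis using Ns_nonneg[OF c0_scale[OF x]] by simp
    next
      case False
      then have cp: "\<bar>c\<bar> > 0" by simp
      have "Ns x \<le> Ns (vscale c x) / \<bar>c\<bar>"
      proof (rule Ns_le)
        fix i
        have "\<bar>c\<bar> * \<bar>x i\<bar> \<le> Ns (vscale c x)" using Ns_coord[OF c0_scale[OF x], of c i]
          by (simp add: vscale_def abs_mult)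
        then show "\<bar>x i\<bar> \<le> Ns (vscale c x) / \<bar>c\<bar>" using cp by (simp add: field_simps)
      qed
      then show ?thesis using cp by (simp add: field_simps)
    qed
  qed
qed

lemma uvec_c0: "uvec j \<in> c0"
  unfolding c0_def
proof (intro CollectI allI impI)
  fix e :: real assume "e > 0"
  then have "{i. \<bar>uvec j i\<bar> \<ge> e} \<subseteq> {j}" by (auto simp: uvec_def)
  then show "finite {i. \<bar>uvec j i\<bar> \<ge> e}" by (rule finite_subset) simp
qed

lemma c0_rn: "y \<in> c0 \<Longrightarrow> Ns (vdiff y (restr E y)) \<le> Ns y"
  by (rule Ns_le) (auto simp: vdiff_def restr_def Ns_coord Ns_nonneg)




lemma c0_P:
  assumes g: "bounded_linear_functional_on c0 Ns g" and d: "dl > 0"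
  shows "\<exists>E. finite E \<and> (\<forall>z\<in>c0. (\<forall>i\<in>E. z i = 0) \<longrightarrow> \<bar>g z\<bar> \<le> dl * Ns z)"
proof -
  obtain C where C: "\<And>x. x \<in> c0 \<Longrightarrow> \<bar>g x\<bar> \<le> C * Ns x"
    using g unfolding bounded_linear_functional_on_def by blast
  define c where "c j = g (uvec j)" for j
  have fc: "g (restr S w) = (\<Sum>j\<in>S. w j * c j) \<and> restr S w \<in> c0" if "finite S" for S w
    using fin_comb[OF c0_ls uvec_c0 g that, of w] restr_fin[OF that, of w] by (simp add: c_def)
  have bd: "(\<Sum>j\<in>S. \<bar>c j\<bar>) \<le> \<bar>C\<bar>" if S: "finite S" for S
  proof -
    define v where "v = restr S (\<lambda>j. sgn (c j))"
    have cs: "c j * sgn (c j) = \<bar>c j\<bar>" for j by (cases "c j" "0::real" rule: linorder_cases) auto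
    have gv: "g v = (\<Sum>j\<in>S. \<bar>c j\<bar>)" and vV: "v \<in> c0"
      using fc[OF S, of "\<lambda>j. sgn (c j)"] by (simp_all add: v_def mult.commute[of "sgn _"] cs)
    have "Ns v \<le> 1" by (rule Ns_le) (simp add: v_def restr_def abs_sgn)
    then have "C * Ns v \<le> \<bar>C\<bar>" using Ns_nonneg[OF vV]
      by (metis abs_ge_self abs_ge_zero mult_left_mono mult_right_mono mult.right_neutral order_trans)
    then show ?thesis using C[OF vV] gv by simp
  qed
  have cs: "(\<lambda>j. \<bar>c j\<bar>) summable_on UNIV"
    by (rule nonneg_bdd_above_summable_on) (use bd in \<open>auto intro!: bdd_aboveI2\<close>)
  obtain E where E: "finite E" "dist (sum (\<lambda>j. \<bar>c j\<bar>) E) (infsum (\<lambda>j. \<bar>c j\<bar>) UNIV) \<le> dl"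
    using infsum_finite_approximation[OF cs, of dl] d by auto
  have small: "(\<Sum>j\<in>S. \<bar>c j\<bar>) \<le> dl" if S: "finite S" "S \<inter> E = {}" for S
  proof -
    have "(\<Sum>j\<in>S \<union> E. \<bar>c j\<bar>) \<le> infsum (\<lambda>j. \<bar>c j\<bar>) UNIV"
      by (rule finite_sum_le_infsum[OF cs]) (use S E in auto)
    moreover have "(\<Sum>j\<in>S \<union> E. \<bar>c j\<bar>) = (\<Sum>j\<in>S. \<bar>c j\<bar>) + (\<Sum>j\<in>E. \<bar>c j\<bar>)"
      using S E by (simp add: sum.union_disjoint)
    ultimately show ?thesis using E(2) by (simp add: dist_real_def)
  qed
  have "\<forall>z\<in>c0. (\<forall>i\<in>E. z i = 0) \<longrightarrow> \<bar>g z\<bar> \<le> dl * Ns z"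
  proof (intro ballI impI)
    fix z assume z: "z \<in> c0" and zE: "\<forall>i\<in>E. z i = 0"
    show "\<bar>g z\<bar> \<le> dl * Ns z"
    proof (rule field_le_epsilon)
      fix eta :: real assume eta: "eta > 0"
      define et where "et = eta / (\<bar>C\<bar> + 1)"
      have et: "et > 0" using eta by (simp add: et_def)
      define F where "F = {i. \<bar>z i\<bar> \<ge> et}"
      have F: "finite F" using z et by (simp add: c0_def F_def)
      have rF: "restr F z \<in> c0" "g (restr F z) = (\<Sum>j\<in>F. z j * c j)" using fc[OF F] by auto
      have dV: "vdiff z (restr F z) \<in> c0" using vdiff_props(1)[OF c0_normed z rF(1)] .
      have Nd: "Ns (vdiff z (restr F z)) \<le> et"
        by (rule Ns_le) (use et in \<open>auto simp: vdiff_def restr_def F_def\<close>)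
      have "z = vadd (restr F z) (vdiff z (restr F z))" by (simp add: vadd_def vdiff_def)
      then have gz: "g z = g (restr F z) + g (vdiff z (restr F z))" using blf_add[OF g rF(1) dV] by simp
      have "\<bar>g (vdiff z (restr F z))\<bar> \<le> C * Ns (vdiff z (restr F z))" using C[OF dV] .
      also have "\<dots> \<le> \<bar>C\<bar> * et" using Nd Ns_nonneg[OF dV]
        by (metis abs_ge_self abs_ge_zero mult_mono order_trans)
      also have "\<dots> \<le> eta" using eta by (simp add: et_def field_simps)
      finally have g1: "\<bar>g (vdiff z (restr F z))\<bar> \<le> eta" .
      have "(\<Sum>j\<in>F. z j * c j) = (\<Sum>j\<in>F - E. z j * c j)"
        by (rule sum.mono_neutral_right) (use F zE in auto)
      then have "\<bar>g (restr F z)\<bar> = \<bar>\<Sum>j\<in>F - E. z j * c j\<bar>" using rF by simp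
      also have "\<dots> \<le> (\<Sum>j\<in>F - E. \<bar>z j * c j\<bar>)" by (rule sum_abs)
      also have "\<dots> \<le> (\<Sum>j\<in>F - E. Ns z * \<bar>c j\<bar>)"
        by (rule sum_mono) (simp add: abs_mult Ns_coord[OF z] mult_right_mono)
      also have "\<dots> = Ns z * (\<Sum>j\<in>F - E. \<bar>c j\<bar>)" by (simp add: sum_distrib_left)
      also have "\<dots> \<le> Ns z * dl"
        by (rule mult_left_mono[OF small Ns_nonneg[OF z]]) (use F in auto)
      finally have g2: "\<bar>g (restr F z)\<bar> \<le> dl * Ns z" by (simp add: mult.commute)
      show "\<bar>g z\<bar> \<le> dl * Ns z + eta" using gz g1 g2 by linarith
    qed
  qed
  then show ?thesis using E(1) by blast
qed

lemma c0_complete: "banach_space_on c0 Ns"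
  unfolding banach_space_on_def
proof (intro conjI allI impI)
  show "normed_space_on c0 Ns" by (rule c0_normed)
  fix s :: "nat \<Rightarrow> ('a \<Rightarrow> real)"
  assume a: "(\<forall>n. s n \<in> c0) \<and> (\<forall>e>0. \<exists>M. \<forall>m\<ge>M. \<forall>n\<ge>M. Ns (vdiff (s m) (s n)) < e)"
  then have sV: "\<And>n. s n \<in> c0" and cau: "\<And>e. e > 0 \<Longrightarrow> \<exists>M. \<forall>m\<ge>M. \<forall>n\<ge>M. Ns (vdiff (s m) (s n)) < e"
    by auto
  have dV: "vdiff (s m) (s n) \<in> c0" for m n using vdiff_props(1)[OF c0_normed sV sV] .
  have pc: "Cauchy (\<lambda>n. s n i)" for i
    unfolding Cauchy_iff
  proof (intro allI impI)
    fix e :: real assume e: "e > 0"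
    obtain M where M: "\<forall>m\<ge>M. \<forall>n\<ge>M. Ns (vdiff (s m) (s n)) < e" using cau[OF e] by blast
    have "\<forall>m\<ge>M. \<forall>n\<ge>M. norm (s m i - s n i) < e"
    proof (intro allI impI)
      fix m n assume "m \<ge> M" "n \<ge> M"
      then have "Ns (vdiff (s m) (s n)) < e" using M by blast
      moreover have "\<bar>vdiff (s m) (s n) i\<bar> \<le> Ns (vdiff (s m) (s n))" using Ns_coord[OF dV] .
      ultimately show "norm (s m i - s n i) < e" by (simp add: vdiff_def)
    qed
    then show "\<exists>M. \<forall>m\<ge>M. \<forall>n\<ge>M. norm (s m i - s n i) < e" by blast
  qed
  define x where "x i = lim (\<lambda>n. s n i)" for i
  have conv: "(\<lambda>n. s n i) \<longlonglongrightarrow> x i" for i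
    using pc[of i] unfolding Cauchy_convergent_iff convergent_LIMSEQ_iff x_def .
  have key: "\<exists>M. \<forall>m\<ge>M. \<forall>i. \<bar>s m i - x i\<bar> \<le> e" if e: "e > 0" for e
  proof -
    obtain M where M: "\<forall>m\<ge>M. \<forall>n\<ge>M. Ns (vdiff (s m) (s n)) < e" using cau[OF e] by blast
    have "\<bar>s m i - x i\<bar> \<le> e" if m: "m \<ge> M" for m i
    proof (rule LIMSEQ_le_const2)
      show "(\<lambda>n. \<bar>s m i - s n i\<bar>) \<longlonglongrightarrow> \<bar>s m i - x i\<bar>" by (intro tendsto_intros conv)
      show "\<exists>N. \<forall>n\<ge>N. \<bar>s m i - s n i\<bar> \<le> e"
      proof (intro exI allI impI)
        fix n assume n: "n \<ge> M"
        have "Ns (vdiff (s m) (s n)) < e" using M m n by blast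
        moreover have "\<bar>vdiff (s m) (s n) i\<bar> \<le> Ns (vdiff (s m) (s n))" using Ns_coord[OF dV] .
        ultimately show "\<bar>s m i - s n i\<bar> \<le> e" by (simp add: vdiff_def)
      qed
    qed
    then show ?thesis by blast
  qed
  have xl: "x \<in> c0"
    unfolding c0_def
  proof (intro CollectI allI impI)
    fix e :: real assume e: "e > 0"
    obtain M where M: "\<forall>m\<ge>M. \<forall>i. \<bar>s m i - x i\<bar> \<le> e / 2" using key[of "e/2"] e by auto
    have "{i. \<bar>x i\<bar> \<ge> e} \<subseteq> {i. \<bar>s M i\<bar> \<ge> e / 2}"
    proof
      fix i assume "i \<in> {i. \<bar>x i\<bar> \<ge> e}"
      then have "\<bar>x i\<bar> \<ge> e" by simp
      moreover have "\<bar>s M i - x i\<bar> \<le> e / 2" using M by blast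
      ultimately have "\<bar>s M i\<bar> \<ge> e / 2" by arith
      then show "i \<in> {i. \<bar>s M i\<bar> \<ge> e / 2}" by simp
    qed
    moreover have "finite {i. \<bar>s M i\<bar> \<ge> e / 2}"
    proof -
      have "e / 2 > 0" using e by simp
      then show ?thesis using sV[of M] unfolding c0_def by blast
    qed
    ultimately show "finite {i. \<bar>x i\<bar> \<ge> e}" by (rule finite_subset)
  qed
  have "(\<lambda>n. Ns (vdiff (s n) x)) \<longlonglongrightarrow> 0"
    unfolding LIMSEQ_iff
  proof (intro allI impI)
    fix r :: real assume r: "r > 0"
    obtain M where MM: "\<forall>m\<ge>M. \<forall>i. \<bar>s m i - x i\<bar> \<le> r / 2" using key[of "r/2"] r by auto
    have "\<forall>n\<ge>M. norm (Ns (vdiff (s n) x) - 0) < r"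
    proof (intro allI impI)
      fix n assume "n \<ge> M"
      then have "Ns (vdiff (s n) x) \<le> r / 2" using MM by (intro Ns_le) (simp add: vdiff_def)
      moreover have "Ns (vdiff (s n) x) \<ge> 0" using Ns_nonneg[OF vdiff_props(1)[OF c0_normed sV xl]] .
      ultimately show "norm (Ns (vdiff (s n) x) - 0) < r" using r by simp
    qed
    then show "\<exists>no. \<forall>n\<ge>no. norm (Ns (vdiff (s n) x) - 0) < r" by blast
  qed
  then show "\<exists>x\<in>c0. (\<lambda>n. Ns (vdiff (s n) x)) \<longlonglongrightarrow> 0" using xl by blast
qed




definition levl :: "(nat \<Rightarrow> 'a set set) \<Rightarrow> 'a set \<Rightarrow> nat" where
  "levl Fm U = (LEAST n. U \<in> Fm n)"

definition wt :: "(nat \<Rightarrow> 'a set set) \<Rightarrow> 'a set set \<Rightarrow> 'a set \<Rightarrow> real" where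
  "wt Fm B U = (if U \<in> B then (1/2) ^ (levl Fm U) else 0)"

definition cf :: "'a topology \<Rightarrow> 'a set \<Rightarrow> 'a \<Rightarrow> real" where
  "cf X U = (SOME f. continuous_map X (top_of_set {0..1}) f \<and> U = topspace X - {x \<in> topspace X. f x = 0})"

definition phi :: "'a topology \<Rightarrow> (nat \<Rightarrow> 'a set set) \<Rightarrow> 'a set set \<Rightarrow> 'a \<Rightarrow> ('a set \<Rightarrow> real)" where
  "phi X Fm B x = (\<lambda>U. wt Fm B U * cf X U x)"

definition KK :: "(nat \<Rightarrow> 'a set set) \<Rightarrow> 'a set set \<Rightarrow> ('a set \<Rightarrow> real) set" where
  "KK Fm B = {y. (\<forall>U. 0 \<le> y U \<and> y U \<le> wt Fm B U) \<and> (\<forall>D. finite D \<and> D \<subseteq> {U. y U \<noteq> 0} \<longrightarrow> \<Inter>D \<noteq> {})}"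

lemma wt_nonneg: "wt Fm B U \<ge> 0" by (simp add: wt_def)
lemma wt_le1: "wt Fm B U \<le> 1" by (simp add: wt_def power_le_one)

lemma levl_in: assumes "U \<in> B" "B = (\<Union>n. Fm n)" shows "U \<in> Fm (levl Fm U)"
proof -
  obtain n where "U \<in> Fm n" using assms by blast
  then show ?thesis unfolding levl_def by (rule LeastI)
qed

lemma cf_props:
  assumes "cozero_set X U"
  shows "continuous_map X (top_of_set {0..1}) (cf X U)" "U = topspace X - {x \<in> topspace X. cf X U x = 0}"
proof -
  have ex: "\<exists>f::'a \<Rightarrow> real. continuous_map X (top_of_set {0..1}) f \<and> U = topspace X - {x \<in> topspace X. f x = 0}"
    using assms unfolding cozero_set_def .
  have "continuous_map X (top_of_set {0..1}) (cf X U) \<and> U = topspace X - {x \<in> topspace X. cf X U x = 0}"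
    unfolding cf_def by (rule someI_ex[OF ex])
  then show "continuous_map X (top_of_set {0..1}) (cf X U)" "U = topspace X - {x \<in> topspace X. cf X U x = 0}"
    by blast+
qed

lemma cf_range: assumes "cozero_set X U" "x \<in> topspace X" shows "0 \<le> cf X U x" "cf X U x \<le> 1"
proof -
  have "cf X U x \<in> topspace (top_of_set {0..1::real})"
    using cf_props(1)[OF assms(1)] assms(2) unfolding continuous_map_def by blast
  then show "0 \<le> cf X U x" "cf X U x \<le> 1" by auto
qed

lemma KK_compact: "compactin (product_topology (\<lambda>_. euclideanreal) UNIV) (KK Fm B)"
proof -
  let ?P = "product_topology (\<lambda>_::'a set. euclideanreal) UNIV"
  define C where "C = {y::'a set \<Rightarrow> real. \<forall>D. finite D \<and> D \<subseteq> {U. y U \<noteq> 0} \<longrightarrow> \<Inter>D \<noteq> {}}"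
  have cP: "compactin ?P (PiE UNIV (\<lambda>U. {0..wt Fm B U}))"
    by (subst compactin_PiE) simp
  have tP: "topspace ?P = UNIV" by (simp add: PiE_UNIV_domain)
  have "openin ?P (UNIV - C)"
  proof (subst openin_subopen, intro ballI)
    fix y assume "y \<in> UNIV - C"
    then obtain D where D: "finite D" "D \<subseteq> {U. y U \<noteq> 0}" "\<Inter>D = {}" unfolding C_def by blast
    define T where "T = PiE UNIV (\<lambda>U. if U \<in> D then - {0::real} else UNIV)"
    have oT: "openin ?P T" unfolding T_def
      by (subst openin_PiE_gen) (use D(1) in \<open>auto intro: finite_subset\<close>)
    have yT: "y \<in> T" using D(2) by (auto simp: T_def PiE_UNIV_domain)
    have "T \<subseteq> UNIV - C"
    proof
      fix z assume "z \<in> T"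
      then have zz: "\<forall>i. z i \<in> (if i \<in> D then - {0} else UNIV)" by (simp add: T_def PiE_UNIV_domain Pi_iff)
      have "\<forall>U\<in>D. z U \<noteq> 0"
      proof
        fix U assume "U \<in> D" then show "z U \<noteq> 0" using zz[rule_format, of U] by simp
      qed
      then have "D \<subseteq> {U. z U \<noteq> 0}" by blast
      then show "z \<in> UNIV - C" using D(1,3) unfolding C_def by blast
    qed
    then show "\<exists>T. openin ?P T \<and> y \<in> T \<and> T \<subseteq> UNIV - C" using oT yT by blast
  qed
  then have "closedin ?P C" unfolding closedin_def tP by simp
  moreover have "closedin ?P (PiE UNIV (\<lambda>U. {0..wt Fm B U}))" 
    by (rule compactin_imp_closedin[OF _ cP]) (simp add: Hausdorff_space_product_topology)
  ultimately have cl: "closedin ?P (PiE UNIV (\<lambda>U. {0..wt Fm B U}) \<inter> C)" by (intro closedin_Int)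
  have "KK Fm B = PiE UNIV (\<lambda>U. {0..wt Fm B U}) \<inter> C"
    unfolding KK_def C_def PiE_UNIV_domain by (rule set_eqI) (simp add: Pi_iff)
  then show ?thesis using closed_compactin[OF cP _ cl] by simp
qed




context
  fixes X :: "'a topology" and B :: "'a set set" and Fm :: "nat \<Rightarrow> 'a set set"
  assumes hX: "Hausdorff_space X" and base: "is_base X B" and coz: "\<And>U. U \<in> B \<Longrightarrow> cozero_set X U"
    and BF: "B = (\<Union>n. Fm n)"
begin

lemma phi_supp:
  assumes "phi X Fm B y U \<noteq> 0" "y \<in> topspace X"
  shows "U \<in> B" "y \<in> U"
proof -
  show UB: "U \<in> B" using assms(1) by (auto simp: phi_def wt_def split: if_splits)
  have "cf X U y \<noteq> 0" using assms(1) by (auto simp: phi_def)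
  then show "y \<in> U" using cf_props(2)[OF coz[OF UB]] assms(2) by blast
qed

lemma phi_pos:
  assumes "U \<in> B" "y \<in> U"
  shows "phi X Fm B y U > 0"
proof -
  have UX: "U \<subseteq> topspace X" using base assms(1) unfolding is_base_def by (blast dest: openin_subset)
  then have yX: "y \<in> topspace X" using assms(2) by blast
  have "cf X U y \<noteq> 0" using cf_props(2)[OF coz[OF assms(1)]] assms(2) by blast
  moreover have "cf X U y \<ge> 0" using cf_range(1)[OF coz[OF assms(1)] yX] .
  moreover have "wt Fm B U > 0" using assms(1) by (simp add: wt_def)
  ultimately show ?thesis by (simp add: phi_def)
qed

lemma phi_cont: "continuous_map X (product_topology (\<lambda>_. euclideanreal) UNIV) (phi X Fm B)"
  unfolding continuous_map_componentwise_UNIV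
proof
  fix U
  show "continuous_map X euclideanreal (\<lambda>x. phi X Fm B x U)"
  proof (cases "U \<in> B")
    case True
    have "continuous_map X euclideanreal (cf X U)"
      using cf_props(1)[OF coz[OF True]] by (simp add: continuous_map_in_subtopology)
    then show ?thesis unfolding phi_def by (rule continuous_map_real_mult_left)
  next
    case False
    then show ?thesis by (simp add: phi_def wt_def)
  qed
qed

lemma phi_K: "phi X Fm B ` topspace X \<subseteq> KK Fm B"
proof
  fix w assume "w \<in> phi X Fm B ` topspace X"
  then obtain x where x: "x \<in> topspace X" "w = phi X Fm B x" by blast
  have a: "0 \<le> w U \<and> w U \<le> wt Fm B U" for U
  proof (cases "U \<in> B")
    case True
    have "0 \<le> cf X U x" "cf X U x \<le> 1" using cf_range[OF coz[OF True] x(1)] by auto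
    then show ?thesis using x(2) wt_nonneg[of Fm B U] by (simp add: phi_def mult_left_le)
  next
    case False then show ?thesis using x(2) by (simp add: phi_def wt_def)
  qed
  have b: "\<Inter>D \<noteq> {}" if "finite D" "D \<subseteq> {U. w U \<noteq> 0}" for D
  proof -
    have "x \<in> U" if "U \<in> D" for U using phi_supp(2)[of x U] x \<open>D \<subseteq> _\<close> that by auto
    then show ?thesis by blast
  qed
  show "w \<in> KK Fm B" unfolding KK_def using a b by blast
qed

lemma phi_sep:
  assumes "openin X Op" "x \<in> Op"
  shows "\<exists>i. 0 < phi X Fm B x i \<and> (\<forall>y\<in>topspace X. 0 < phi X Fm B y i \<longrightarrow> y \<in> Op)"
proof -
  obtain B' where B': "B' \<subseteq> B" "\<Union>B' = Op" using base assms(1) unfolding is_base_def by blast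
  then obtain U where U: "U \<in> B" "x \<in> U" "U \<subseteq> Op" using assms(2) by blast
  have "\<forall>y\<in>topspace X. 0 < phi X Fm B y U \<longrightarrow> y \<in> Op"
    using phi_supp(2) U(3) by force
  then show ?thesis using phi_pos[OF U(1,2)] by blast
qed

lemma phi_inj: "inj_on (phi X Fm B) (topspace X)"
proof (rule inj_onI, rule ccontr)
  fix x y assume x: "x \<in> topspace X" and y: "y \<in> topspace X" and eq: "phi X Fm B x = phi X Fm B y" and ne: "x \<noteq> y"
  obtain Op V where "openin X Op" "openin X V" "x \<in> Op" "y \<in> V" "disjnt Op V"
    using hX x y ne unfolding Hausdorff_space_def by blast
  then have O: "openin X Op" "x \<in> Op" "y \<notin> Op" by (auto simp: disjnt_def)
  obtain i where "0 < phi X Fm B x i" "\<forall>z\<in>topspace X. 0 < phi X Fm B z i \<longrightarrow> z \<in> Op"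
    using phi_sep[OF O(1,2)] by blast
  then show False using eq y O(3) by metis
qed

lemma KK_l2:
  assumes dj: "\<And>n. disjoint (Fm n)" and y: "y \<in> KK Fm B"
  shows "y \<in> l2" "N2 y \<le> 2"
proof -
  have yr: "0 \<le> y U" "y U \<le> wt Fm B U" for U using y unfolding KK_def by blast+
  have yD: "\<Inter>D \<noteq> {}" if "finite D" "D \<subseteq> {U. y U \<noteq> 0}" for D
  proof -
    have "\<forall>D. finite D \<and> D \<subseteq> {U. y U \<noteq> 0} \<longrightarrow> \<Inter>D \<noteq> {}" using y unfolding KK_def by blast
    then show ?thesis using that by blast
  qed
  have inB: "U \<in> B" if "y U \<noteq> 0" for U
  proof (rule ccontr)
    assume "U \<notin> B" then have "wt Fm B U = 0" by (simp add: wt_def)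
    then show False using yr[of U] that by simp
  qed
  have fin: "(\<Sum>U\<in>S. y U * y U) \<le> 2" if S: "finite S" for S
  proof -
    define S' where "S' = {U\<in>S. y U \<noteq> 0}"
    have fS': "finite S'" using S by (simp add: S'_def)
    have "(\<Sum>U\<in>S. y U * y U) = (\<Sum>U\<in>S'. y U * y U)"
      by (rule sum.mono_neutral_right) (auto simp: S'_def S)
    also have "\<dots> \<le> (\<Sum>U\<in>S'. (1/4) ^ levl Fm U)"
    proof (rule sum_mono)
      fix U assume "U \<in> S'"
      then have UB: "U \<in> B" using inB by (auto simp: S'_def)
      have yw: "y U \<le> (1/2) ^ levl Fm U" using yr(2)[of U] UB by (simp add: wt_def)
      have "y U * y U \<le> (1/2) ^ levl Fm U * (1/2) ^ levl Fm U"
        by (rule mult_mono[OF yw yw]) (simp_all add: yr(1))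
      also have "\<dots> = ((1/2) * (1/2)) ^ levl Fm U" by (rule power_mult_distrib[symmetric])
      also have "\<dots> = (1/4) ^ levl Fm U" by simp
      finally show "y U * y U \<le> (1/4) ^ levl Fm U" .
    qed
    also have "\<dots> = (\<Sum>n\<in>levl Fm ` S'. (1/4) ^ n)"
    proof (rule sum.reindex[symmetric, unfolded o_def])
      show "inj_on (levl Fm) S'"
      proof (rule inj_onI, rule ccontr)
        fix U U' assume U: "U \<in> S'" and U': "U' \<in> S'" and eq: "levl Fm U = levl Fm U'" and ne: "U \<noteq> U'"
        have "U \<in> Fm (levl Fm U)" using levl_in[OF _ BF] inB U by (auto simp: S'_def)
        moreover have "U' \<in> Fm (levl Fm U)" using levl_in[OF _ BF] inB U' eq by (auto simp: S'_def)
        moreover have "pairwise disjnt (Fm (levl Fm U))" using dj[of "levl Fm U"] by (simp add: disjoint_def)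
        ultimately have "disjnt U U'" using ne by (auto dest: pairwiseD)
        then have "\<Inter>{U, U'} = {}" by (simp add: disjnt_def)
        moreover have "\<Inter>{U, U'} \<noteq> {}" by (rule yD) (use U U' in \<open>auto simp: S'_def\<close>)
        ultimately show False by blast
      qed
    qed
    also have "\<dots> \<le> suminf (\<lambda>n. (1/4::real) ^ n)"
    proof (rule sum_le_suminf)
      show "summable (\<lambda>n. (1/4::real) ^ n)" by (rule summable_geometric) simp
      show "finite (levl Fm ` S')" using fS' by simp
    qed simp
    also have "\<dots> = 4/3" by (subst suminf_geometric) simp_all
    finally show ?thesis by simp
  qed
  have ys: "(\<lambda>U. y U * y U) summable_on UNIV"
    by (rule nonneg_bdd_above_summable_on) (use fin in \<open>auto intro!: bdd_aboveI2\<close>)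
  then show "y \<in> l2" by (simp add: l2_def power2_eq_square)
  have "ip2 y y \<le> 2" unfolding ip2_def by (rule infsum_le_finite_sums[OF ys]) (use fin in auto)
  then have "sqrt (ip2 y y) \<le> sqrt 4" by (intro real_sqrt_le_mono) simp
  then show "N2 y \<le> 2" by (simp add: N2_def)
qed

lemma KK_c0:
  assumes sp: "\<And>n. strongly_point_finite (Fm n)" and y: "y \<in> KK Fm B"
  shows "y \<in> c0" "Ns y \<le> 1"
proof -
  have yr: "0 \<le> y U" "y U \<le> wt Fm B U" for U using y unfolding KK_def by blast+
  have yD: "\<Inter>D \<noteq> {}" if "finite D" "D \<subseteq> {U. y U \<noteq> 0}" for D
  proof -
    have "\<forall>D. finite D \<and> D \<subseteq> {U. y U \<noteq> 0} \<longrightarrow> \<Inter>D \<noteq> {}" using y unfolding KK_def by blast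
    then show ?thesis using that by blast
  qed
  have finl: "finite {U \<in> Fm n. y U \<noteq> 0}" for n
  proof (rule ccontr)
    assume "infinite {U \<in> Fm n. y U \<noteq> 0}"
    then obtain C where C: "C \<subseteq> {U \<in> Fm n. y U \<noteq> 0}" "countable C" "infinite C"
      using infinite_countable_subset' by blast
    have CF: "C \<subseteq> Fm n" using C(1) by blast
    have "\<forall>C. C \<subseteq> Fm n \<and> countable C \<and> infinite C \<longrightarrow> (\<exists>D. D \<subseteq> C \<and> finite D \<and> \<Inter>D = {})"
      using sp[of n] unfolding strongly_point_finite_def .
    then have "\<exists>D. D \<subseteq> C \<and> finite D \<and> \<Inter>D = {}" using CF C(2,3) by simp
    then obtain D where D: "D \<subseteq> C" "finite D" "\<Inter>D = {}" by blast
    have "D \<subseteq> {U. y U \<noteq> 0}" using D(1) C(1) by blast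
    then have "\<Inter>D \<noteq> {}" using yD D(2) by blast
    then show False using D(3) by simp
  qed
  show "y \<in> c0" unfolding c0_def
  proof (intro CollectI allI impI)
    fix e :: real assume e: "e > 0"
    obtain m where m: "(1/2::real) ^ m < e" using real_arch_pow_inv[OF e, of "1/2"] by auto
    have "{U. \<bar>y U\<bar> \<ge> e} \<subseteq> (\<Union>n<m. {U \<in> Fm n. y U \<noteq> 0})"
    proof
      fix U assume "U \<in> {U. \<bar>y U\<bar> \<ge> e}"
      then have ye: "y U \<ge> e" using yr[of U] by simp
      then have "wt Fm B U \<ge> e" using yr[of U] by linarith
      then have UB: "U \<in> B" and we: "(1/2) ^ levl Fm U \<ge> e" using e by (auto simp: wt_def split: if_splits)
      have "levl Fm U < m"
      proof (rule ccontr)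
        assume "\<not> levl Fm U < m"
        then have "(1/2::real) ^ levl Fm U \<le> (1/2) ^ m" by (intro power_decreasing) auto
        then show False using we m by linarith
      qed
      moreover have "U \<in> Fm (levl Fm U)" using levl_in[OF UB BF] .
      ultimately show "U \<in> (\<Union>n<m. {U \<in> Fm n. y U \<noteq> 0})" using ye e by auto
    qed
    moreover have "finite (\<Union>n<m. {U \<in> Fm n. y U \<noteq> 0})" using finl by auto
    ultimately show "finite {U. \<bar>y U\<bar> \<ge> e}" by (rule finite_subset)
  qed
  show "Ns y \<le> 1"
  proof (rule Ns_le)
    fix i show "\<bar>y i\<bar> \<le> 1" using yr(1)[of i] yr(2)[of i] wt_le1[of Fm B i] by simp
  qed
qed

end




theorem theorem5p2:
  fixes X :: "'a topology"
  assumes "tychonoff_space X"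
  shows "((\<exists>B. is_base X B \<and> (\<forall>U\<in>B. cozero_set X U) \<and> sigma_disjoint B)
            \<longrightarrow> embeds_in_uniform_eberlein_compact X)
       \<and> ((\<exists>B. is_base X B \<and> (\<forall>U\<in>B. cozero_set X U) \<and> sigma_strongly_point_finite B)
            \<longrightarrow> embeds_in_eberlein_compact X)"
proof (intro conjI impI)
  have hX: "Hausdorff_space X" using assms by (simp add: tychonoff_space_def)
  assume "\<exists>B. is_base X B \<and> (\<forall>U\<in>B. cozero_set X U) \<and> sigma_disjoint B"
  then obtain B where base: "is_base X B" and coz0: "\<forall>U\<in>B. cozero_set X U" and sd: "sigma_disjoint B"
    by blast
  have coz: "\<And>U. U \<in> B \<Longrightarrow> cozero_set X U" using coz0 by blast
  have "\<exists>Fm::nat \<Rightarrow> 'a set set. B = (\<Union>n. Fm n) \<and> (\<forall>n. disjoint (Fm n))" using sd unfolding sigma_disjoint_def .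
  then obtain Fm :: "nat \<Rightarrow> 'a set set" where Fm: "B = (\<Union>n. Fm n) \<and> (\<forall>n. disjoint (Fm n))" ..
  then have BF: "B = (\<Union>n. Fm n)" and dj: "\<And>n. disjoint (Fm n)" by auto
  have KV: "KK Fm B \<subseteq> l2" using KK_l2(1)[OF hX base coz BF dj] by blast
  have "compactin (weak_topology l2 N2) (KK Fm B) \<and> embedding_map X (subtopology (weak_topology l2 N2) (KK Fm B)) (phi X Fm B)"
  proof (rule embed_generic[where R=2])
    show "normed_space_on l2 N2" by (rule l2_normed)
    show "uvec j \<in> l2" for j by (rule uvec_l2)
    show "\<bar>y i\<bar> \<le> N2 y" if "y \<in> l2" for y i using l2_coord[OF that] .
    show "\<exists>E. finite E \<and> (\<forall>z\<in>l2. (\<forall>i\<in>E. z i = 0) \<longrightarrow> \<bar>g z\<bar> \<le> d * N2 z)"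
      if "bounded_linear_functional_on l2 N2 g" "d > 0" for g d using l2_P[OF that] .
    show "N2 (vdiff y (restr E y)) \<le> N2 y" if "y \<in> l2" for y E using l2_rn[OF that] .
    show "KK Fm B \<subseteq> l2" by (rule KV)
    show "N2 y \<le> 2" if "y \<in> KK Fm B" for y using KK_l2(2)[OF hX base coz BF dj that] .
    show "compactin (product_topology (\<lambda>_. euclideanreal) UNIV) (KK Fm B)" by (rule KK_compact)
    show "continuous_map X (product_topology (\<lambda>_. euclideanreal) UNIV) (phi X Fm B)"
      by (rule phi_cont[OF hX base coz BF])
    show "phi X Fm B ` topspace X \<subseteq> KK Fm B" by (rule phi_K[OF hX base coz BF])
    show "\<exists>i. 0 < phi X Fm B x i \<and> (\<forall>y\<in>topspace X. 0 < phi X Fm B y i \<longrightarrow> y \<in> Op)"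
      if "openin X Op" "x \<in> Op" for Op x using phi_sep[OF hX base coz BF that] .
    show "inj_on (phi X Fm B) (topspace X)" by (rule phi_inj[OF hX base coz BF])
  qed
  moreover have N2eq: "(\<lambda>x. sqrt (ip2 x x)) = N2" by (simp add: N2_def fun_eq_iff)
  ultimately have R: "compactin (weak_topology l2 (\<lambda>x. sqrt (ip2 x x))) (KK Fm B) \<and>
     embedding_map X (subtopology (weak_topology l2 (\<lambda>x. sqrt (ip2 x x))) (KK Fm B)) (phi X Fm B)"
    by (simp only: N2eq)
  show "embeds_in_uniform_eberlein_compact X"
    unfolding embeds_in_uniform_eberlein_compact_def
    by (rule exI[of _ l2], rule exI[of _ ip2], rule exI[of _ "KK Fm B"], rule exI[of _ "phi X Fm B"])
       (use R KV l2_hilbert in blast)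
next
  have hX: "Hausdorff_space X" using assms by (simp add: tychonoff_space_def)
  assume "\<exists>B. is_base X B \<and> (\<forall>U\<in>B. cozero_set X U) \<and> sigma_strongly_point_finite B"
  then obtain B where base: "is_base X B" and coz0: "\<forall>U\<in>B. cozero_set X U" and sd: "sigma_strongly_point_finite B"
    by blast
  have coz: "\<And>U. U \<in> B \<Longrightarrow> cozero_set X U" using coz0 by blast
  have "\<exists>Fm::nat \<Rightarrow> 'a set set. B = (\<Union>n. Fm n) \<and> (\<forall>n. strongly_point_finite (Fm n))" using sd unfolding sigma_strongly_point_finite_def .
  then obtain Fm :: "nat \<Rightarrow> 'a set set" where Fm: "B = (\<Union>n. Fm n) \<and> (\<forall>n. strongly_point_finite (Fm n))" ..
  then have BF: "B = (\<Union>n. Fm n)" and sp: "\<And>n. strongly_point_finite (Fm n)" by auto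
  have KV: "KK Fm B \<subseteq> c0" using KK_c0(1)[OF hX base coz BF sp] by blast
  have "compactin (weak_topology c0 Ns) (KK Fm B) \<and> embedding_map X (subtopology (weak_topology c0 Ns) (KK Fm B)) (phi X Fm B)"
  proof (rule embed_generic[where R=1])
    show "normed_space_on c0 Ns" by (rule c0_normed)
    show "uvec j \<in> c0" for j by (rule uvec_c0)
    show "\<bar>y i\<bar> \<le> Ns y" if "y \<in> c0" for y i using Ns_coord[OF that] .
    show "\<exists>E. finite E \<and> (\<forall>z\<in>c0. (\<forall>i\<in>E. z i = 0) \<longrightarrow> \<bar>g z\<bar> \<le> d * Ns z)"
      if "bounded_linear_functional_on c0 Ns g" "d > 0" for g d using c0_P[OF that] .
    show "Ns (vdiff y (restr E y)) \<le> Ns y" if "y \<in> c0" for y E using c0_rn[OF that] .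
    show "KK Fm B \<subseteq> c0" by (rule KV)
    show "Ns y \<le> 1" if "y \<in> KK Fm B" for y using KK_c0(2)[OF hX base coz BF sp that] .
    show "compactin (product_topology (\<lambda>_. euclideanreal) UNIV) (KK Fm B)" by (rule KK_compact)
    show "continuous_map X (product_topology (\<lambda>_. euclideanreal) UNIV) (phi X Fm B)"
      by (rule phi_cont[OF hX base coz BF])
    show "phi X Fm B ` topspace X \<subseteq> KK Fm B" by (rule phi_K[OF hX base coz BF])
    show "\<exists>i. 0 < phi X Fm B x i \<and> (\<forall>y\<in>topspace X. 0 < phi X Fm B y i \<longrightarrow> y \<in> Op)"
      if "openin X Op" "x \<in> Op" for Op x using phi_sep[OF hX base coz BF that] .
    show "inj_on (phi X Fm B) (topspace X)" by (rule phi_inj[OF hX base coz BF])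
  qed
  then show "embeds_in_eberlein_compact X"
    unfolding embeds_in_eberlein_compact_def
    by (intro exI[of _ c0] exI[of _ Ns] exI[of _ "KK Fm B"] exI[of _ "phi X Fm B"]) (use KV c0_complete in blast)
qed



end
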